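(* Let $\Lambda$ be a row-finite source-free $k$-graph and let $\pi$ be an irreducible representation of $C^*(\Lambda)$ arising from a $\Lambda$-semibranching function system on $(X,\mu)$, where $\mu$ has an atom $y\in X$. Then $\pi$ is purely atomic, and the associated projection-valued measure is supported on the orbit of $\phi(y)$.
   Context: A $k$-graph is a countable small category $\Lambda$ with a functor $d:\Lambda\to\mathbb{N}^k$ with unique factorization; vertices $\Lambda^0$, $r,s$ range/source, $v\Lambda^n$ paths of degree $n$ with range $v$; row-finite/source-free: $v\Lambda^n$ finite/nonempty. $C^*(\Lambda)$ is the universal $C^*$-algebra of a Cuntz–Krieger $\Lambda$-family $\{s_\lambda\}$. $\Lambda^\infty$ is the set of infinite paths (degree-preserving functors $\Omega_k\to\Lambda$), with cylinder sets $Z(\lambda)$, shifts $\sigma^n$, and the orbit of $x$ being $\{\lambda\sigma^n(x):\lambda\in\Lambda,n\in\mathbb{N}^k\}$; a sequence $(\lambda_n)$ with $\lambda_n\in\Lambda^{(n,\ldots,n)}$ and each $\lambda_n$ an initial segment of $\lambda_{n+1}$ determines a unique infinite path. A $\Lambda$-semibranching function system on $(X,\mu)$: sets $D_\lambda$, prefixing maps $\tau_\lambda:D_\lambda\to X$ with ranges $R_\lambda$, coding maps $\tau^m$, such that for each $m$ $\{\tau_\lambda:d(\lambda)=m\}$ is a semibranching function system with coding map $\tau^m$ (ranges a.e. disjoint, a.e. covering, finite positive measures, positive Radon–Nikodym derivatives $\Phi_\lambda=d(\mu\circ\tau_\lambda)/d\mu$, $\tau^m\circ\tau_\lambda=\mathrm{id}$),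 $\tau_v=\mathrm{id}$, $\tau_\lambda\tau_\nu=\tau_{\lambda\nu}$ a.e., $\tau^m\tau^n=\tau^{m+n}$. The arising representation is $\pi(s_\lambda)=S_\lambda$, $S_\lambda\xi(x)=\chi_{R_\lambda}(x)\Phi_\lambda(\tau^{d(\lambda)}(x))^{-1/2}\xi(\tau^{d(\lambda)}(x))$. The map $\phi$: discarding a null set, get $Y\subseteq X$ with $Y=\bigsqcup_v (Y\cap R_v)$, $Y\cap R_\lambda\subseteq Y\cap D_{r(\lambda)}$ and $Y\cap R_v=\bigsqcup_{\lambda\in v\Lambda^n} Y\cap R_\lambda$ for all $v,n$. For $y\in Y$ and each $n$ there is a unique $\lambda_n\in\Lambda^{(n,\ldots,n)}$ with $y\in R_{\lambda_n}$; $\phi(y)$ is the infinite path determined by $(\lambda_n)$. Projection-valued measure of $\pi$: the unique regular projection-valued measure $P$ on the Borel sets of $\Lambda^\infty$ with $P(Z(\lambda))=\pi(s_\lambda s_\lambda^* )$. $\pi$ is purely atomic if there is a Borel $\Omega\subseteq\Lambda^\infty$ with $P(\Lambda^\infty\setminus\Omega)=0$, $P(\{\omega\})\ne0$ for all $\omega\in\Omega$, and $\bigoplus_{\omega\in\Omega}P(\{\omega\})=\mathrm{Id}$ (strong operator topology). *)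

theory Defs
  imports "HOL-Probability.Probability"
begin

text \<open>Elements of N^k are represented as functions nat => nat vanishing from index k on.\<close>

type_synonym deg = "nat \<Rightarrow> nat"

definition NK :: "nat \<Rightarrow> deg set" where
  "NK k = {m. \<forall>i\<ge>k. m i = 0}"

definition dadd :: "deg \<Rightarrow> deg \<Rightarrow> deg" where
  "dadd m n = (\<lambda>i. m i + n i)"

definition dsub :: "deg \<Rightarrow> deg \<Rightarrow> deg" where
  "dsub n m = (\<lambda>i. n i - m i)"

definition dle :: "deg \<Rightarrow> deg \<Rightarrow> bool" where
  "dle m n \<longleftrightarrow> (\<forall>i. m i \<le> n i)"

definition dzero :: deg where
  "dzero = (\<lambda>i. 0)"

definition diag :: "nat \<Rightarrow> nat \<Rightarrow> deg" where
  "diag k n = (\<lambda>i. if i < k then n else 0)"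

text \<open>A small category given by its set of morphisms; objects are identified with
  identity morphisms (vertices). rng/src are range/source, cmp composition
  (cmp l m = l m, defined when src l = rng m), dg the degree functor.\<close>

record 'a kgraph =
  mor :: "'a set"
  rng :: "'a \<Rightarrow> 'a"
  src :: "'a \<Rightarrow> 'a"
  cmp :: "'a \<Rightarrow> 'a \<Rightarrow> 'a"
  dg  :: "'a \<Rightarrow> deg"

definition vertices :: "'a kgraph \<Rightarrow> 'a set" where
  "vertices G = {v \<in> mor G. \<exists>l\<in>mor G. v = rng G l \<or> v = src G l}"

definition k_graph :: "nat \<Rightarrow> 'a kgraph \<Rightarrow> bool" where
  "k_graph k G \<longleftrightarrow>
     countable (mor G) \<and>
     (\<forall>l\<in>mor G. rng G l \<in> mor G \<and> src G l \<in> mor G) \<and>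
     (\<forall>v\<in>vertices G. rng G v = v \<and> src G v = v) \<and>
     (\<forall>l\<in>mor G. \<forall>m\<in>mor G. src G l = rng G m \<longrightarrow>
        cmp G l m \<in> mor G \<and> rng G (cmp G l m) = rng G l \<and> src G (cmp G l m) = src G m) \<and>
     (\<forall>l\<in>mor G. cmp G (rng G l) l = l \<and> cmp G l (src G l) = l) \<and>
     (\<forall>l\<in>mor G. \<forall>m\<in>mor G. \<forall>n\<in>mor G. src G l = rng G m \<and> src G m = rng G n \<longrightarrow>
        cmp G (cmp G l m) n = cmp G l (cmp G m n)) \<and>
     (\<forall>l\<in>mor G. dg G l \<in> NK k) \<and>
     (\<forall>l\<in>mor G. \<forall>m\<in>mor G. src G l = rng G m \<longrightarrow>
        dg G (cmp G l m) = dadd (dg G l) (dg G m)) \<and>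
     (\<forall>l\<in>mor G. \<forall>m\<in>NK k. \<forall>n\<in>NK k. dg G l = dadd m n \<longrightarrow>
        (\<exists>!p. fst p \<in> mor G \<and> snd p \<in> mor G \<and> src G (fst p) = rng G (snd p) \<and>
              dg G (fst p) = m \<and> dg G (snd p) = n \<and> cmp G (fst p) (snd p) = l))"

definition row_finite_source_free :: "nat \<Rightarrow> 'a kgraph \<Rightarrow> bool" where
  "row_finite_source_free k G \<longleftrightarrow>
     (\<forall>v\<in>vertices G. \<forall>n\<in>NK k.
        finite {l\<in>mor G. rng G l = v \<and> dg G l = n} \<and>
        {l\<in>mor G. rng G l = v \<and> dg G l = n} \<noteq> {})"

text \<open>An infinite path is a degree-preserving functor from Omega_k, whose morphisms are
  pairs (m,n) with m <= n in N^k; we write x m n for x(m,n) and make it extensional.\<close>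

definition inf_paths :: "nat \<Rightarrow> 'a kgraph \<Rightarrow> (deg \<Rightarrow> deg \<Rightarrow> 'a) set" where
  "inf_paths k G = {x.
     (\<forall>m n. \<not> (m \<in> NK k \<and> n \<in> NK k \<and> dle m n) \<longrightarrow> x m n = undefined) \<and>
     (\<forall>m\<in>NK k. \<forall>n\<in>NK k. dle m n \<longrightarrow> x m n \<in> mor G \<and> dg G (x m n) = dsub n m) \<and>
     (\<forall>m\<in>NK k. x m m \<in> vertices G) \<and>
     (\<forall>m\<in>NK k. \<forall>n\<in>NK k. \<forall>p\<in>NK k. dle m n \<and> dle n p \<longrightarrow>
        src G (x m n) = rng G (x n p) \<and> cmp G (x m n) (x n p) = x m p)}"

definition shift :: "nat \<Rightarrow> deg \<Rightarrow> (deg \<Rightarrow> deg \<Rightarrow> 'a) \<Rightarrow> (deg \<Rightarrow> deg \<Rightarrow> 'a)" where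
  "shift k n x = (\<lambda>m p. if m \<in> NK k \<and> p \<in> NK k \<and> dle m p
                        then x (dadd m n) (dadd p n) else undefined)"

definition cylinder :: "nat \<Rightarrow> 'a kgraph \<Rightarrow> 'a \<Rightarrow> (deg \<Rightarrow> deg \<Rightarrow> 'a) set" where
  "cylinder k G l = {x \<in> inf_paths k G. x dzero (dg G l) = l}"

text \<open>The Borel sets of the infinite path space: the sigma-algebra generated by the
  cylinder sets (which form a countable base of the topology).\<close>

definition paths_borel :: "nat \<Rightarrow> 'a kgraph \<Rightarrow> (deg \<Rightarrow> deg \<Rightarrow> 'a) set set" where
  "paths_borel k G = sigma_sets (inf_paths k G) (cylinder k G ` mor G)"

text \<open>The orbit of x: all paths l sigma^n(x). The path l y is the unique infinite path z
  with z(0, d l) = l and sigma^{d l}(z) = y.\<close>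

definition orbit :: "nat \<Rightarrow> 'a kgraph \<Rightarrow> (deg \<Rightarrow> deg \<Rightarrow> 'a) \<Rightarrow> (deg \<Rightarrow> deg \<Rightarrow> 'a) set" where
  "orbit k G x = {z \<in> inf_paths k G. \<exists>l\<in>mor G. \<exists>n\<in>NK k.
      z dzero (dg G l) = l \<and> shift k (dg G l) z = shift k n x}"

definition Rg :: "('a \<Rightarrow> 'x set) \<Rightarrow> ('a \<Rightarrow> 'x \<Rightarrow> 'x) \<Rightarrow> 'a \<Rightarrow> 'x set" where
  "Rg D \<tau> l = \<tau> l ` D l"

text \<open>D l: domain of the prefixing map tau l; tc m: coding map tau^m;
  Phi l: Radon-Nikodym derivative d(mu o tau_l)/d mu (on D l).\<close>

definition lambda_sbfs ::
  "nat \<Rightarrow> 'a kgraph \<Rightarrow> 'x measure \<Rightarrow> ('a \<Rightarrow> 'x set) \<Rightarrow> ('a \<Rightarrow> 'x \<Rightarrow> 'x)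
   \<Rightarrow> (deg \<Rightarrow> 'x \<Rightarrow> 'x) \<Rightarrow> ('a \<Rightarrow> 'x \<Rightarrow> real) \<Rightarrow> bool" where
  "lambda_sbfs k G M D \<tau> tc \<Phi> \<longleftrightarrow>
     (\<forall>m\<in>NK k. tc m \<in> M \<rightarrow>\<^sub>M M) \<and>
     (\<forall>l\<in>mor G.
        D l \<in> sets M \<and>
        \<tau> l \<in> restrict_space M (D l) \<rightarrow>\<^sub>M M \<and>
        (\<forall>A\<in>sets M. A \<subseteq> D l \<longrightarrow> \<tau> l ` A \<in> sets M) \<and>
        0 < emeasure M (Rg D \<tau> l) \<and> emeasure M (Rg D \<tau> l) < \<infinity> \<and>
        \<Phi> l \<in> borel_measurable M \<and> (\<forall>x. 0 \<le> \<Phi> l x) \<and>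
        (\<forall>A\<in>sets M. A \<subseteq> D l \<longrightarrow>
           emeasure M (\<tau> l ` A) = (\<integral>\<^sup>+ x\<in>A. ennreal (\<Phi> l x) \<partial>M)) \<and>
        (AE x in M. x \<in> D l \<longrightarrow> 0 < \<Phi> l x) \<and>
        (\<forall>x\<in>D l. tc (dg G l) (\<tau> l x) = x)) \<and>
     (\<forall>m\<in>NK k.
        emeasure M (space M - (\<Union>l\<in>{l\<in>mor G. dg G l = m}. Rg D \<tau> l)) = 0 \<and>
        (\<forall>l\<in>mor G. \<forall>n\<in>mor G. dg G l = m \<and> dg G n = m \<and> l \<noteq> n \<longrightarrow>
           emeasure M (Rg D \<tau> l \<inter> Rg D \<tau> n) = 0)) \<and>
     (\<forall>v\<in>vertices G. \<forall>x\<in>D v. \<tau> v x = x) \<and>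
     (\<forall>l\<in>mor G. \<forall>n\<in>mor G. src G l = rng G n \<longrightarrow>
        (AE x in M. ((x \<in> D n \<and> \<tau> n x \<in> D l) \<longleftrightarrow> x \<in> D (cmp G l n)) \<and>
                    (x \<in> D (cmp G l n) \<longrightarrow> \<tau> l (\<tau> n x) = \<tau> (cmp G l n) x))) \<and>
     (\<forall>m\<in>NK k. \<forall>n\<in>NK k. \<forall>x\<in>space M. tc m (tc n x) = tc (dadd m n) x)"

text \<open>Elements of L^2 are represented by square-integrable measurable complex functions;
  equality in L^2 is a.e. equality (aeq).\<close>

definition L2 :: "'x measure \<Rightarrow> ('x \<Rightarrow> complex) set" where
  "L2 M = {f. f \<in> borel_measurable M \<and> integrable M (\<lambda>x. (cmod (f x))\<^sup>2)}"

definition aeq :: "'x measure \<Rightarrow> ('x \<Rightarrow> complex) \<Rightarrow> ('x \<Rightarrow> complex) \<Rightarrow> bool" where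
  "aeq M f g \<longleftrightarrow> (AE x in M. f x = g x)"

definition ip :: "'x measure \<Rightarrow> ('x \<Rightarrow> complex) \<Rightarrow> ('x \<Rightarrow> complex) \<Rightarrow> complex" where
  "ip M f g = (LINT x|M. f x * cnj (g x))"

definition nrm :: "'x measure \<Rightarrow> ('x \<Rightarrow> complex) \<Rightarrow> real" where
  "nrm M f = sqrt (LINT x|M. (cmod (f x))\<^sup>2)"

definition zero_op :: "'x measure \<Rightarrow> (('x \<Rightarrow> complex) \<Rightarrow> ('x \<Rightarrow> complex)) \<Rightarrow> bool" where
  "zero_op M T \<longleftrightarrow> (\<forall>f\<in>L2 M. aeq M (T f) (\<lambda>_. 0))"

definition adj :: "'x measure \<Rightarrow> (('x \<Rightarrow> complex) \<Rightarrow> ('x \<Rightarrow> complex))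
                   \<Rightarrow> (('x \<Rightarrow> complex) \<Rightarrow> ('x \<Rightarrow> complex))" where
  "adj M T = (SOME T'. (\<forall>f\<in>L2 M. T' f \<in> L2 M) \<and>
                       (\<forall>f\<in>L2 M. \<forall>g\<in>L2 M. ip M (T f) g = ip M f (T' g)))"

definition closed_subspace :: "'x measure \<Rightarrow> ('x \<Rightarrow> complex) set \<Rightarrow> bool" where
  "closed_subspace M V \<longleftrightarrow>
     V \<subseteq> L2 M \<and> (\<lambda>_. 0) \<in> V \<and>
     (\<forall>f\<in>V. \<forall>g\<in>V. (\<lambda>x. f x + g x) \<in> V) \<and>
     (\<forall>c. \<forall>f\<in>V. (\<lambda>x. c * f x) \<in> V) \<and>
     (\<forall>f\<in>V. \<forall>g\<in>L2 M. aeq M f g \<longrightarrow> g \<in> V) \<and>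
     (\<forall>F f. (\<forall>n. F n \<in> V) \<and> f \<in> L2 M \<and>
            (\<lambda>n. nrm M (\<lambda>x. F n x - f x)) \<longlonglongrightarrow> 0 \<longrightarrow> f \<in> V)"

definition orthc :: "'x measure \<Rightarrow> ('x \<Rightarrow> complex) set \<Rightarrow> ('x \<Rightarrow> complex) set" where
  "orthc M V = {g \<in> L2 M. \<forall>f\<in>V. ip M f g = 0}"

text \<open>A representation of C*(Lambda) given by the generators S_l is irreducible iff
  no closed subspace other than 0 and L^2 is invariant under all S_l and S_l^*
  (equivalently, under all S_l, with its orthogonal complement also invariant).\<close>

definition irreducible_ops :: "'x measure \<Rightarrow> (('x \<Rightarrow> complex) \<Rightarrow> ('x \<Rightarrow> complex)) set \<Rightarrow> bool" where
  "irreducible_ops M Ops \<longleftrightarrow>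
     (\<forall>V. closed_subspace M V \<and>
          (\<forall>T\<in>Ops. \<forall>f\<in>V. T f \<in> V) \<and>
          (\<forall>T\<in>Ops. \<forall>g\<in>orthc M V. T g \<in> orthc M V)
        \<longrightarrow> (\<forall>f\<in>V. aeq M f (\<lambda>_. 0)) \<or> L2 M \<subseteq> V)"

definition Sop :: "'a kgraph \<Rightarrow> ('a \<Rightarrow> 'x set) \<Rightarrow> ('a \<Rightarrow> 'x \<Rightarrow> 'x) \<Rightarrow> (deg \<Rightarrow> 'x \<Rightarrow> 'x)
                   \<Rightarrow> ('a \<Rightarrow> 'x \<Rightarrow> real) \<Rightarrow> 'a \<Rightarrow> ('x \<Rightarrow> complex) \<Rightarrow> ('x \<Rightarrow> complex)" where
  "Sop G D \<tau> tc \<Phi> l f = (\<lambda>x. if x \<in> Rg D \<tau> l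
       then complex_of_real (1 / sqrt (\<Phi> l (tc (dg G l) x))) * f (tc (dg G l) x)
       else 0)"

definition is_pvm :: "'x measure \<Rightarrow> 'p set \<Rightarrow> 'p set set
                      \<Rightarrow> ('p set \<Rightarrow> ('x \<Rightarrow> complex) \<Rightarrow> ('x \<Rightarrow> complex)) \<Rightarrow> bool" where
  "is_pvm M S B P \<longleftrightarrow>
     (\<forall>E\<in>B. \<forall>f\<in>L2 M. P E f \<in> L2 M) \<and>
     (\<forall>E\<in>B. \<forall>f\<in>L2 M. aeq M (P E (P E f)) (P E f)) \<and>
     (\<forall>E\<in>B. \<forall>f\<in>L2 M. \<forall>g\<in>L2 M. ip M (P E f) g = ip M f (P E g)) \<and>
     (\<forall>f\<in>L2 M. aeq M (P S f) f) \<and>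
     (\<forall>E\<in>B. \<forall>F\<in>B. \<forall>f\<in>L2 M. aeq M (P (E \<inter> F) f) (P E (P F f))) \<and>
     (\<forall>E::nat \<Rightarrow> 'p set. range E \<subseteq> B \<and> disjoint_family E \<longrightarrow>
        (\<forall>f\<in>L2 M. (\<lambda>n. nrm M (\<lambda>x. P (\<Union>i. E i) f x - (\<Sum>i<n. P (E i) f x))) \<longlonglongrightarrow> 0))"

definition purely_atomic :: "'x measure \<Rightarrow> 'p set \<Rightarrow> 'p set set
                      \<Rightarrow> ('p set \<Rightarrow> ('x \<Rightarrow> complex) \<Rightarrow> ('x \<Rightarrow> complex)) \<Rightarrow> bool" where
  "purely_atomic M S B P \<longleftrightarrow>
     (\<exists>Om. Om \<subseteq> S \<and> Om \<in> B \<and> zero_op M (P (S - Om)) \<and>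
        (\<forall>\<omega>\<in>Om. {\<omega>} \<in> B \<and> \<not> zero_op M (P {\<omega>})) \<and>
        (\<forall>f\<in>L2 M. \<forall>\<epsilon>>0. \<exists>F. finite F \<and> F \<subseteq> Om \<and>
           (\<forall>H. finite H \<and> F \<subseteq> H \<and> H \<subseteq> Om \<longrightarrow>
              nrm M (\<lambda>x. f x - (\<Sum>\<omega>\<in>H. P {\<omega>} f x)) < \<epsilon>)))"

definition phi :: "nat \<Rightarrow> 'a kgraph \<Rightarrow> ('a \<Rightarrow> 'x set) \<Rightarrow> ('a \<Rightarrow> 'x \<Rightarrow> 'x) \<Rightarrow> 'x
                   \<Rightarrow> (deg \<Rightarrow> deg \<Rightarrow> 'a)" where
  "phi k G D \<tau> y = (THE x. x \<in> inf_paths k G \<and>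
                      (\<forall>n. y \<in> Rg D \<tau> (x dzero (diag k n))))"

end

theory Submission
  imports Defs
begin


lemma NK_zero[simp]: "dzero \<in> NK k" by (simp add: NK_def dzero_def)
lemma NK_add[simp]: "m \<in> NK k \<Longrightarrow> n \<in> NK k \<Longrightarrow> dadd m n \<in> NK k" by (simp add: NK_def dadd_def)
lemma NK_sub[simp]: "m \<in> NK k \<Longrightarrow> dsub m n \<in> NK k" by (simp add: NK_def dsub_def)
lemma NK_diag[simp]: "diag k n \<in> NK k" by (simp add: NK_def diag_def)
lemma dadd_zero[simp]: "dadd dzero m = m" "dadd m dzero = m" by (auto simp: dadd_def dzero_def)
lemma dsub_zero[simp]: "dsub m dzero = m" "dsub m m = dzero" by (auto simp: dsub_def dzero_def)
lemma dadd_comm: "dadd m n = dadd n m" by (auto simp: dadd_def)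
lemma dadd_assoc: "dadd (dadd a b) c = dadd a (dadd b c)" by (auto simp: dadd_def)
lemma dle_refl[simp]: "dle m m" by (simp add: dle_def)
lemma dle_zero[simp]: "dle dzero m" by (simp add: dle_def dzero_def)
lemma dle_trans: "dle a b \<Longrightarrow> dle b c \<Longrightarrow> dle a c" by (auto simp: dle_def intro: le_trans)
lemma dle_add[simp]: "dle m (dadd m n)" "dle m (dadd n m)" by (auto simp: dle_def dadd_def)
lemma dle_add_mono: "dle a b \<Longrightarrow> dle (dadd a c) (dadd b c)" by (auto simp: dle_def dadd_def)
lemma dsub_add[simp]: "dsub (dadd m n) m = n" "dsub (dadd n m) m = n" by (auto simp: dsub_def dadd_def)
lemma dadd_dsub: "dle m p \<Longrightarrow> dadd m (dsub p m) = p" by (auto simp: dle_def dsub_def dadd_def fun_eq_iff)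
lemma dadd_dsub': "dle m p \<Longrightarrow> dadd (dsub p m) m = p" by (auto simp: dle_def dsub_def dadd_def fun_eq_iff)
lemma dsub_dsub: "dle m n \<Longrightarrow> dle n p \<Longrightarrow> dadd (dsub n m) (dsub p n) = dsub p m"
  by (auto simp: dle_def dsub_def dadd_def fun_eq_iff)
lemma dadd_cancel: "dadd m n = dadd m n' \<Longrightarrow> n = n'" by (auto simp: dadd_def fun_eq_iff)
lemma dsub_add_add: "dsub (dadd p n) (dadd m n) = dsub p m" by (auto simp: dadd_def dsub_def)
lemma dle_diag: "m \<in> NK k \<Longrightarrow> \<exists>n. dle m (diag k n)"
proof -
  assume m: "m \<in> NK k"
  have "\<forall>i. m i \<le> diag k (Max (m ` {..<k})) i"
    using m by (auto simp: diag_def NK_def)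
  then show ?thesis unfolding dle_def by blast
qed
lemma dle_sub_mono: "dle m p \<Longrightarrow> dle (dsub m a) (dsub p a)" by (auto simp: dle_def dsub_def diff_le_mono)

lemma countable_NK: "countable (NK k)"
proof (rule countable_image_inj_on)
  show "countable ((\<lambda>m. map m [0..<k]) ` NK k)" by simp
  show "inj_on (\<lambda>m. map m [0..<k]) (NK k)"
  proof
    fix m n assume "m \<in> NK k" "n \<in> NK k" "map m [0..<k] = map n [0..<k]"
    then show "m = n" by (auto simp: NK_def fun_eq_iff map_eq_conv)
  qed
qed

locale kg =
  fixes k :: nat and G :: "'a kgraph"
  assumes kg: "k_graph k G"
begin

lemma countable_mor: "countable (mor G)" using kg by (simp add: k_graph_def)
lemma rng_mor[simp]: "l \<in> mor G \<Longrightarrow> rng G l \<in> mor G" using kg by (simp add: k_graph_def)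
lemma src_mor[simp]: "l \<in> mor G \<Longrightarrow> src G l \<in> mor G" using kg by (simp add: k_graph_def)
lemma vert: "v \<in> vertices G \<Longrightarrow> rng G v = v \<and> src G v = v" using kg by (simp add: k_graph_def)
lemma vert_mor: "v \<in> vertices G \<Longrightarrow> v \<in> mor G" by (simp add: vertices_def)
lemma cmp_mor[simp]: "l \<in> mor G \<Longrightarrow> m \<in> mor G \<Longrightarrow> src G l = rng G m \<Longrightarrow> cmp G l m \<in> mor G"
  using kg by (simp add: k_graph_def)
lemma cmp_rng[simp]: "l \<in> mor G \<Longrightarrow> m \<in> mor G \<Longrightarrow> src G l = rng G m \<Longrightarrow> rng G (cmp G l m) = rng G l"
  using kg by (simp add: k_graph_def)
lemma cmp_src[simp]: "l \<in> mor G \<Longrightarrow> m \<in> mor G \<Longrightarrow> src G l = rng G m \<Longrightarrow> src G (cmp G l m) = src G m"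
  using kg by (simp add: k_graph_def)
lemma cmp_dg[simp]: "l \<in> mor G \<Longrightarrow> m \<in> mor G \<Longrightarrow> src G l = rng G m \<Longrightarrow> dg G (cmp G l m) = dadd (dg G l) (dg G m)"
  using kg by (simp add: k_graph_def)
lemma cmp_id[simp]: "l \<in> mor G \<Longrightarrow> cmp G (rng G l) l = l" "l \<in> mor G \<Longrightarrow> cmp G l (src G l) = l"
  using kg by (simp_all add: k_graph_def)
lemma cmp_assoc: "l \<in> mor G \<Longrightarrow> m \<in> mor G \<Longrightarrow> n \<in> mor G \<Longrightarrow> src G l = rng G m \<Longrightarrow> src G m = rng G n \<Longrightarrow>
   cmp G (cmp G l m) n = cmp G l (cmp G m n)"
  using kg unfolding k_graph_def by blast
lemma dg_NK[simp]: "l \<in> mor G \<Longrightarrow> dg G l \<in> NK k" using kg by (simp add: k_graph_def)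
lemma fact_ex1: "l \<in> mor G \<Longrightarrow> m \<in> NK k \<Longrightarrow> n \<in> NK k \<Longrightarrow> dg G l = dadd m n \<Longrightarrow>
   (\<exists>!p. fst p \<in> mor G \<and> snd p \<in> mor G \<and> src G (fst p) = rng G (snd p) \<and>
              dg G (fst p) = m \<and> dg G (snd p) = n \<and> cmp G (fst p) (snd p) = l)"
  using kg unfolding k_graph_def by blast

lemma fact_ex: assumes "l \<in> mor G" "m \<in> NK k" "n \<in> NK k" "dg G l = dadd m n"
  obtains a b where "a \<in> mor G" "b \<in> mor G" "src G a = rng G b" "dg G a = m" "dg G b = n" "cmp G a b = l"
  using fact_ex1[OF assms] by auto

lemma fact_uniq:
  assumes "a \<in> mor G" "b \<in> mor G" "src G a = rng G b" "a' \<in> mor G" "b' \<in> mor G" "src G a' = rng G b'"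
    "dg G a = dg G a'" "dg G b = dg G b'" "cmp G a b = cmp G a' b'"
  shows "a = a' \<and> b = b'"
proof -
  have "\<exists>!p. fst p \<in> mor G \<and> snd p \<in> mor G \<and> src G (fst p) = rng G (snd p) \<and>
              dg G (fst p) = dg G a \<and> dg G (snd p) = dg G b \<and> cmp G (fst p) (snd p) = cmp G a b"
    using assms by (intro fact_ex1) auto
  then have "(a,b) = (a',b')" using assms by (metis fst_conv snd_conv)
  then show ?thesis by simp
qed

lemma rng_vert[simp]: "l \<in> mor G \<Longrightarrow> rng G l \<in> vertices G"
  by (auto simp: vertices_def)
lemma src_vert[simp]: "l \<in> mor G \<Longrightarrow> src G l \<in> vertices G"
  by (auto simp: vertices_def)

lemma dg_vert: assumes "v \<in> vertices G" shows "dg G v = dzero"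
proof -
  have v: "v \<in> mor G" "rng G v = v" "src G v = v" using assms vert vert_mor by auto
  have "dg G (cmp G v v) = dadd (dg G v) (dg G v)" using v by simp
  moreover have "cmp G v v = v" using v cmp_id(1)[of v] by simp
  ultimately have "dg G v = dadd (dg G v) (dg G v)" by simp
  then show ?thesis by (auto simp: dadd_def dzero_def fun_eq_iff)
qed

lemma dg0_vert: assumes "l \<in> mor G" "dg G l = dzero" shows "l = rng G l"
proof -
  have "rng G l \<in> mor G" "src G l \<in> mor G" using assms by auto
  have "dg G (rng G l) = dzero" "dg G (src G l) = dzero" using assms dg_vert by auto
  have "src G (rng G l) = rng G l" using vert[of "rng G l"] assms by simp
  have "rng G (src G l) = src G l" using vert[of "src G l"] assms by simp
  show ?thesis
    using fact_uniq[of l "src G l" "rng G l" l] assms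
      \<open>dg G (rng G l) = dzero\<close> \<open>dg G (src G l) = dzero\<close> \<open>src G (rng G l) = rng G l\<close> \<open>rng G (src G l) = src G l\<close>
    by simp
qed

end


context kg begin

abbreviation "S \<equiv> inf_paths k G"
abbreviation "B \<equiv> paths_borel k G"
lemma path_undef: "x \<in> S \<Longrightarrow> \<not> (m \<in> NK k \<and> n \<in> NK k \<and> dle m n) \<Longrightarrow> x m n = undefined"
  by (simp add: inf_paths_def)
lemma path_mor: "x \<in> S \<Longrightarrow> m \<in> NK k \<Longrightarrow> n \<in> NK k \<Longrightarrow> dle m n \<Longrightarrow> x m n \<in> mor G"
  by (simp add: inf_paths_def)
lemma path_dg: "x \<in> S \<Longrightarrow> m \<in> NK k \<Longrightarrow> n \<in> NK k \<Longrightarrow> dle m n \<Longrightarrow> dg G (x m n) = dsub n m"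
  by (simp add: inf_paths_def)
lemma path_cmp: assumes "x \<in> S" "m \<in> NK k" "n \<in> NK k" "p \<in> NK k" "dle m n" "dle n p" shows
   "src G (x m n) = rng G (x n p) \<and> cmp G (x m n) (x n p) = x m p"
proof -
  have "\<forall>m\<in>NK k. \<forall>n\<in>NK k. \<forall>p\<in>NK k. dle m n \<and> dle n p \<longrightarrow>
        src G (x m n) = rng G (x n p) \<and> cmp G (x m n) (x n p) = x m p"
    using assms(1) unfolding inf_paths_def mem_Collect_eq by (elim conjE)
  then show ?thesis using assms by blast
qed
lemma path_vert: "x \<in> S \<Longrightarrow> m \<in> NK k \<Longrightarrow> x m m \<in> vertices G"
  by (simp add: inf_paths_def)
lemma shift_at: "m \<in> NK k \<Longrightarrow> p \<in> NK k \<Longrightarrow> dle m p \<Longrightarrow> shift k n x m p = x (dadd m n) (dadd p n)"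
  unfolding shift_def by simp
lemma C: assumes "x \<in> S" "n \<in> NK k" "m \<in> NK k" shows "shift k n x m m \<in> vertices G"
proof -
  have e: "shift k n x m m = x (dadd m n) (dadd m n)" by (rule shift_at[OF assms(3) assms(3) dle_refl])
  show ?thesis unfolding e by (rule path_vert[OF assms(1) NK_add[OF assms(3) assms(2)]])
qed
lemma B: assumes x: "x \<in> S" and n: "n \<in> NK k" and a: "m \<in> NK k" "p \<in> NK k" "dle m p"
  shows "shift k n x m p \<in> mor G \<and> dg G (shift k n x m p) = dsub p m"
proof -
  have e: "shift k n x m p = x (dadd m n) (dadd p n)" by (rule shift_at[OF a])
  have l: "dle (dadd m n) (dadd p n)" using a(3) by (rule dle_add_mono)
  have "x (dadd m n) (dadd p n) \<in> mor G" using path_mor[OF x _ _ l] a n by simp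
  moreover have "dg G (x (dadd m n) (dadd p n)) = dsub p m" using path_dg[OF x _ _ l] a n dsub_add_add by simp
  ultimately show ?thesis unfolding e by simp
qed
lemma D: assumes x: "x \<in> S" and n: "n \<in> NK k" and a: "m \<in> NK k" "p \<in> NK k" "q \<in> NK k" "dle m p" "dle p q"
  shows "src G (shift k n x m p) = rng G (shift k n x p q) \<and> cmp G (shift k n x m p) (shift k n x p q) = shift k n x m q"
proof -
  have mq: "dle m q" using dle_trans a(4,5) by blast
  have e: "shift k n x m p = x (dadd m n) (dadd p n)" "shift k n x p q = x (dadd p n) (dadd q n)"
     "shift k n x m q = x (dadd m n) (dadd q n)"
    by (rule shift_at[OF a(1,2,4)], rule shift_at[OF a(2,3,5)], rule shift_at[OF a(1,3) mq])
  have l: "dle (dadd m n) (dadd p n)" "dle (dadd p n) (dadd q n)"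
    using dle_add_mono[OF a(4)] dle_add_mono[OF a(5)] by auto
  show ?thesis unfolding e
    by (rule path_cmp[OF x NK_add[OF a(1) n] NK_add[OF a(2) n] NK_add[OF a(3) n] l])
qed

lemma shift_undef: "\<not> (m \<in> NK k \<and> p \<in> NK k \<and> dle m p) \<Longrightarrow> shift k n x m p = undefined"
  unfolding shift_def by (rule if_not_P)

lemma shift_in: assumes x: "x \<in> S" and n: "n \<in> NK k" shows "shift k n x \<in> S"
  unfolding inf_paths_def mem_Collect_eq
proof (intro conjI)
  show "\<forall>m p. \<not> (m \<in> NK k \<and> p \<in> NK k \<and> dle m p) \<longrightarrow> shift k n x m p = undefined"
    using shift_undef by blast
  show "\<forall>m\<in>NK k. \<forall>p\<in>NK k. dle m p \<longrightarrow> shift k n x m p \<in> mor G \<and> dg G (shift k n x m p) = dsub p m"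
    using B[OF x n] by blast
  show "\<forall>m\<in>NK k. shift k n x m m \<in> vertices G" using C[OF x n] by blast
  show "\<forall>m\<in>NK k. \<forall>p\<in>NK k. \<forall>q\<in>NK k. dle m p \<and> dle p q \<longrightarrow>
     src G (shift k n x m p) = rng G (shift k n x p q) \<and> cmp G (shift k n x m p) (shift k n x p q) = shift k n x m q"
    using D[OF x n] by blast
qed

lemma path_det:
  assumes x: "x \<in> S" and w: "w \<in> S" and h: "\<And>m. m \<in> NK k \<Longrightarrow> \<exists>p\<in>NK k. dle m p \<and> x dzero p = w dzero p"
  shows "x = w"
proof (intro ext)
  fix m p
  show "x m p = w m p"
  proof (cases "m \<in> NK k \<and> p \<in> NK k \<and> dle m p")
    case False then show ?thesis using path_undef x w by metis
  next
    case True
    then have m: "m \<in> NK k" and p: "p \<in> NK k" and mp: "dle m p" by auto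
    obtain q where q: "q \<in> NK k" "dle p q" "x dzero q = w dzero q" using h[OF p] by blast
    have mq: "dle m q" using mp q dle_trans by blast
    have 1: "x m q = w m q"
      using fact_uniq[of "x dzero m" "x m q" "w dzero m" "w m q"]
        path_cmp[OF x, of dzero m q] path_cmp[OF w, of dzero m q] m q mq x w path_mor path_dg by simp
    show ?thesis
      using fact_uniq[of "x m p" "x p q" "w m p" "w p q"]
        path_cmp[OF x, of m p q] path_cmp[OF w, of m p q] m p q mp x w 1 path_mor path_dg by simp
  qed
qed

lemma sa_B: "sigma_algebra S B"
  unfolding paths_borel_def by (rule sigma_algebra_sigma_sets) (auto simp: cylinder_def)

lemma cyl_B: "l \<in> mor G \<Longrightarrow> cylinder k G l \<in> B"
  unfolding paths_borel_def by (rule sigma_sets.Basic) auto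

lemma B_sub: "E \<in> B \<Longrightarrow> E \<subseteq> S"
  unfolding paths_borel_def by (rule sigma_sets_into_sp[rotated]) (auto simp: cylinder_def)

lemma singleton_B: assumes w: "w \<in> S" shows "{w} \<in> B"
proof -
  have eq: "{w} = (\<Inter>n\<in>UNIV. cylinder k G (w dzero (diag k n)))"
  proof (intro equalityI subsetI)
    fix x assume "x \<in> {w}" then show "x \<in> (\<Inter>n\<in>UNIV. cylinder k G (w dzero (diag k n)))"
      using w by (auto simp: cylinder_def path_dg path_mor)
  next
    fix x assume "x \<in> (\<Inter>n\<in>UNIV. cylinder k G (w dzero (diag k n)))"
    then have x: "x \<in> S" and e: "\<And>n. x dzero (diag k n) = w dzero (diag k n)"
      using w by (auto simp: cylinder_def path_dg path_mor)
    have "x = w"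
    proof (rule path_det[OF x w])
      fix m assume "m \<in> NK k"
      then obtain n where "dle m (diag k n)" using dle_diag by blast
      then show "\<exists>p\<in>NK k. dle m p \<and> x dzero p = w dzero p" using e by (intro bexI[of _ "diag k n"]) auto
    qed
    then show "x \<in> {w}" by simp
  qed
  show ?thesis unfolding eq
    using w by (intro sigma_algebra.countable_INT[OF sa_B]) (auto intro!: cyl_B simp: path_mor[OF w])
qed

lemma countable_B: "A \<subseteq> S \<Longrightarrow> countable A \<Longrightarrow> A \<in> B"
  by (rule sigma_algebra.countable[OF sa_B]) (auto intro: singleton_B)

lemma shift_shift: "a \<in> NK k \<Longrightarrow> shift k a (shift k b x) = shift k (dadd a b) x"
  unfolding shift_def fun_eq_iff by (simp add: dadd_assoc dle_add_mono)

lemma orbit_sub: "orbit k G x \<subseteq> S" unfolding orbit_def by blast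

lemma orbit_countable: "countable (orbit k G x)"
proof -
  let ?T = "\<lambda>l n. {z \<in> S. z dzero (dg G l) = l \<and> shift k (dg G l) z = shift k n x}"
  have sub: "orbit k G x \<subseteq> (\<Union>l\<in>mor G. \<Union>n\<in>NK k. ?T l n)" by (auto simp: orbit_def)
  have sgl: "z = z'" if l: "l \<in> mor G" and z: "z \<in> ?T l n" and z': "z' \<in> ?T l n" for l n z z'
  proof (rule path_det)
    show "z \<in> S" "z' \<in> S" using z z' by auto
    fix m assume m: "m \<in> NK k"
    let ?d = "dg G l"
    have d: "?d \<in> NK k" using l by simp
    have key: "y dzero (dadd m ?d) = cmp G l (shift k ?d y dzero m)" if y: "y \<in> ?T l n" for y
    proof -
      have "y \<in> S" using y by auto
      from path_cmp[OF this, of dzero ?d "dadd m ?d"] d m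
      have "cmp G (y dzero ?d) (y ?d (dadd m ?d)) = y dzero (dadd m ?d)" by simp
      moreover have "shift k ?d y dzero m = y ?d (dadd m ?d)" using m by (simp add: shift_at)
      ultimately show ?thesis using y by simp
    qed
    have "shift k ?d z dzero m = shift k ?d z' dzero m" using z z' by simp
    then have "z dzero (dadd m ?d) = z' dzero (dadd m ?d)" using key[OF z] key[OF z'] by simp
    then show "\<exists>p\<in>NK k. dle m p \<and> z dzero p = z' dzero p" using m d by (intro bexI[of _ "dadd m ?d"]) auto
  qed
  have "countable (?T l n)" if "l \<in> mor G" for l n
  proof (cases "?T l n = {}")
    case False
    then obtain z where "z \<in> ?T l n" by blast
    then have "?T l n = {z}" using sgl[OF that] by blast
    then show ?thesis by simp
  qed (metis countable_empty)
  then have "countable (\<Union>l\<in>mor G. \<Union>n\<in>NK k. ?T l n)"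
    using countable_mor countable_NK by blast
  then show ?thesis using sub countable_subset by blast
qed

lemma orbit_B: "orbit k G x \<in> B"
  by (rule countable_B[OF orbit_sub orbit_countable])

end


locale sb = kg k G for k :: nat and G :: "'a kgraph" +
  fixes M :: "'x measure" and D :: "'a \<Rightarrow> 'x set" and \<tau> :: "'a \<Rightarrow> 'x \<Rightarrow> 'x"
    and tc :: "deg \<Rightarrow> 'x \<Rightarrow> 'x" and \<Phi> :: "'a \<Rightarrow> 'x \<Rightarrow> real"
  assumes sb: "lambda_sbfs k G M D \<tau> tc \<Phi>"
begin

abbreviation "R \<equiv> Rg D \<tau>"

lemma sbc: "(\<forall>m\<in>NK k. tc m \<in> M \<rightarrow>\<^sub>M M) \<and>
     (\<forall>l\<in>mor G.
        D l \<in> sets M \<and>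
        \<tau> l \<in> restrict_space M (D l) \<rightarrow>\<^sub>M M \<and>
        (\<forall>A\<in>sets M. A \<subseteq> D l \<longrightarrow> \<tau> l ` A \<in> sets M) \<and>
        0 < emeasure M (R l) \<and> emeasure M (R l) < \<infinity> \<and>
        \<Phi> l \<in> borel_measurable M \<and> (\<forall>x. 0 \<le> \<Phi> l x) \<and>
        (\<forall>A\<in>sets M. A \<subseteq> D l \<longrightarrow>
           emeasure M (\<tau> l ` A) = (\<integral>\<^sup>+ x\<in>A. ennreal (\<Phi> l x) \<partial>M)) \<and>
        (AE x in M. x \<in> D l \<longrightarrow> 0 < \<Phi> l x) \<and>
        (\<forall>x\<in>D l. tc (dg G l) (\<tau> l x) = x)) \<and>
     (\<forall>m\<in>NK k.
        emeasure M (space M - (\<Union>l\<in>{l\<in>mor G. dg G l = m}. R l)) = 0 \<and>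
        (\<forall>l\<in>mor G. \<forall>n\<in>mor G. dg G l = m \<and> dg G n = m \<and> l \<noteq> n \<longrightarrow>
           emeasure M (R l \<inter> R n) = 0)) \<and>
     (\<forall>v\<in>vertices G. \<forall>x\<in>D v. \<tau> v x = x) \<and>
     (\<forall>l\<in>mor G. \<forall>n\<in>mor G. src G l = rng G n \<longrightarrow>
        (AE x in M. ((x \<in> D n \<and> \<tau> n x \<in> D l) \<longleftrightarrow> x \<in> D (cmp G l n)) \<and>
                    (x \<in> D (cmp G l n) \<longrightarrow> \<tau> l (\<tau> n x) = \<tau> (cmp G l n) x))) \<and>
     (\<forall>m\<in>NK k. \<forall>n\<in>NK k. \<forall>x\<in>space M. tc m (tc n x) = tc (dadd m n) x)"
  using sb unfolding lambda_sbfs_def .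

lemma sbl: "l \<in> mor G \<Longrightarrow> D l \<in> sets M \<and>
        \<tau> l \<in> restrict_space M (D l) \<rightarrow>\<^sub>M M \<and>
        (\<forall>A\<in>sets M. A \<subseteq> D l \<longrightarrow> \<tau> l ` A \<in> sets M) \<and>
        0 < emeasure M (R l) \<and> emeasure M (R l) < \<infinity> \<and>
        \<Phi> l \<in> borel_measurable M \<and> (\<forall>x. 0 \<le> \<Phi> l x) \<and>
        (\<forall>A\<in>sets M. A \<subseteq> D l \<longrightarrow>
           emeasure M (\<tau> l ` A) = (\<integral>\<^sup>+ x\<in>A. ennreal (\<Phi> l x) \<partial>M)) \<and>
        (AE x in M. x \<in> D l \<longrightarrow> 0 < \<Phi> l x) \<and>
        (\<forall>x\<in>D l. tc (dg G l) (\<tau> l x) = x)"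
  using sbc[THEN conjunct2, THEN conjunct1] by (rule bspec)

lemma sb_tc_meas: "m \<in> NK k \<Longrightarrow> tc m \<in> M \<rightarrow>\<^sub>M M"
  by (rule bspec[OF sbc[THEN conjunct1]])
lemma sb_D: "l \<in> mor G \<Longrightarrow> D l \<in> sets M"
  by (drule sbl) (elim conjE)
lemma sb_tau_meas: "l \<in> mor G \<Longrightarrow> \<tau> l \<in> restrict_space M (D l) \<rightarrow>\<^sub>M M"
  by (drule sbl) (elim conjE)
lemma sb_img: "l \<in> mor G \<Longrightarrow> A \<in> sets M \<Longrightarrow> A \<subseteq> D l \<Longrightarrow> \<tau> l ` A \<in> sets M"
  by (drule sbl) blast
lemma sb_Rpos: "l \<in> mor G \<Longrightarrow> 0 < emeasure M (R l)"
  by (drule sbl) (elim conjE)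
lemma sb_Rfin: "l \<in> mor G \<Longrightarrow> emeasure M (R l) < \<infinity>"
  by (drule sbl) (elim conjE)
lemma sb_Phi_meas[measurable]: "l \<in> mor G \<Longrightarrow> \<Phi> l \<in> borel_measurable M"
  by (drule sbl) (elim conjE)
lemma sb_Phi_nn: "l \<in> mor G \<Longrightarrow> 0 \<le> \<Phi> l x"
  by (drule sbl) blast
lemma sb_img_meas: "l \<in> mor G \<Longrightarrow> A \<in> sets M \<Longrightarrow> A \<subseteq> D l \<Longrightarrow>
    emeasure M (\<tau> l ` A) = (\<integral>\<^sup>+ x\<in>A. ennreal (\<Phi> l x) \<partial>M)"
  by (drule sbl) blast
lemma sb_Phi_pos: "l \<in> mor G \<Longrightarrow> AE x in M. x \<in> D l \<longrightarrow> 0 < \<Phi> l x"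
  by (drule sbl) (elim conjE)
lemma sb_tc_tau: "l \<in> mor G \<Longrightarrow> x \<in> D l \<Longrightarrow> tc (dg G l) (\<tau> l x) = x"
  by (drule sbl) blast
lemma sb_cover: "m \<in> NK k \<Longrightarrow> emeasure M (space M - (\<Union>l\<in>{l\<in>mor G. dg G l = m}. R l)) = 0"
  by (drule bspec[OF sbc[THEN conjunct2, THEN conjunct2, THEN conjunct1]]) (elim conjE)
lemma sb_disj: "l \<in> mor G \<Longrightarrow> n \<in> mor G \<Longrightarrow> dg G l = dg G n \<Longrightarrow> l \<noteq> n \<Longrightarrow> emeasure M (R l \<inter> R n) = 0"
proof -
  assume a: "l \<in> mor G" "n \<in> mor G" "dg G l = dg G n" "l \<noteq> n"
  have "(\<forall>a\<in>mor G. \<forall>b\<in>mor G. dg G a = dg G l \<and> dg G b = dg G l \<and> a \<noteq> b \<longrightarrow>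
           emeasure M (R a \<inter> R b) = 0)"
    using bspec[OF sbc[THEN conjunct2, THEN conjunct2, THEN conjunct1] dg_NK[OF a(1)]] by (elim conjE)
  from bspec[OF bspec[OF this a(1)] a(2)] show ?thesis using a by simp
qed
lemma sb_vert: "v \<in> vertices G \<Longrightarrow> x \<in> D v \<Longrightarrow> \<tau> v x = x"
  using sbc[THEN conjunct2, THEN conjunct2, THEN conjunct2, THEN conjunct1] by (elim ballE) auto
lemma sb_comp: "l \<in> mor G \<Longrightarrow> n \<in> mor G \<Longrightarrow> src G l = rng G n \<Longrightarrow>
   (AE x in M. ((x \<in> D n \<and> \<tau> n x \<in> D l) \<longleftrightarrow> x \<in> D (cmp G l n)) \<and>
                    (x \<in> D (cmp G l n) \<longrightarrow> \<tau> l (\<tau> n x) = \<tau> (cmp G l n) x))"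
  by (rule mp[OF bspec[OF bspec[OF sbc[THEN conjunct2, THEN conjunct2, THEN conjunct2, THEN conjunct2, THEN conjunct1]]]])

lemma R_sets: "l \<in> mor G \<Longrightarrow> R l \<in> sets M"
  unfolding Rg_def using sb_img[of l "D l"] sb_D[of l] by simp
lemma D_space: "l \<in> mor G \<Longrightarrow> D l \<subseteq> space M"
  by (rule sets.sets_into_space[OF sb_D])
lemma tau_space: assumes l: "l \<in> mor G" and x: "x \<in> D l" shows "\<tau> l x \<in> space M"
proof -
  have "x \<in> space (restrict_space M (D l))" using x D_space[OF l] by (auto simp: space_restrict_space)
  then show ?thesis by (rule measurable_space[OF sb_tau_meas[OF l]])
qed
lemma R_space: "l \<in> mor G \<Longrightarrow> R l \<subseteq> space M"
  by (rule sets.sets_into_space[OF R_sets])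
lemma tau_inj: assumes "l \<in> mor G" "x \<in> D l" "x' \<in> D l" "\<tau> l x = \<tau> l x'" shows "x = x'"
proof -
  have "x = tc (dg G l) (\<tau> l x)" using sb_tc_tau[OF assms(1,2)] by simp
  also have "\<dots> = tc (dg G l) (\<tau> l x')" using assms(4) by simp
  also have "\<dots> = x'" using sb_tc_tau[OF assms(1,3)] .
  finally show ?thesis .
qed
lemma R_iff: assumes l: "l \<in> mor G" shows "z \<in> R l \<longleftrightarrow> tc (dg G l) z \<in> D l \<and> \<tau> l (tc (dg G l) z) = z"
proof
  assume "z \<in> R l"
  then obtain w where w: "w \<in> D l" "z = \<tau> l w" unfolding Rg_def by blast
  then show "tc (dg G l) z \<in> D l \<and> \<tau> l (tc (dg G l) z) = z" using sb_tc_tau[OF l w(1)] by simp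
next
  assume "tc (dg G l) z \<in> D l \<and> \<tau> l (tc (dg G l) z) = z"
  then show "z \<in> R l" unfolding Rg_def by (metis image_eqI)
qed

definition atom :: "'x \<Rightarrow> bool" where
  "atom z \<longleftrightarrow> z \<in> space M \<and> {z} \<in> sets M \<and> 0 < emeasure M {z}"

lemma atom_AE: "AE x in M. P x \<Longrightarrow> atom z \<Longrightarrow> P z"
proof (rule ccontr)
  assume ae: "AE x in M. P x" and z: "atom z" and nP: "\<not> P z"
  from ae obtain N where N: "{x\<in>space M. \<not> P x} \<subseteq> N" "N \<in> sets M" "emeasure M N = 0"
    by (auto elim: AE_E)
  have "{z} \<subseteq> N" using N(1) z nP by (auto simp: atom_def)
  then have "emeasure M {z} \<le> emeasure M N" using N(2) by (rule emeasure_mono)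
  then show False using N(3) z by (auto simp: atom_def)
qed

lemma atom_in_R: assumes z: "atom z" and m: "m \<in> NK k"
  shows "\<exists>!l. l \<in> mor G \<and> dg G l = m \<and> z \<in> R l"
proof -
  have ex: "\<exists>l. l \<in> mor G \<and> dg G l = m \<and> z \<in> R l"
  proof (rule ccontr)
    assume "\<not> ?thesis"
    then have "{z} \<subseteq> space M - (\<Union>l\<in>{l\<in>mor G. dg G l = m}. R l)" using z by (auto simp: atom_def)
    have U: "(\<Union>l\<in>{l\<in>mor G. dg G l = m}. R l) \<in> sets M"
      by (rule sets.countable_UN''[OF countable_subset[OF _ countable_mor]]) (auto simp: R_sets)
    have "emeasure M {z} \<le> emeasure M (space M - (\<Union>l\<in>{l\<in>mor G. dg G l = m}. R l))"
      by (rule emeasure_mono[OF \<open>{z} \<subseteq> _\<close>]) (rule sets.compl_sets[OF U])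
    then show False using sb_cover[OF m] z by (auto simp: atom_def)
  qed
  have un: "l = n" if "l \<in> mor G" "dg G l = m" "z \<in> R l" "n \<in> mor G" "dg G n = m" "z \<in> R n" for l n
  proof (rule ccontr)
    assume "l \<noteq> n"
    then have 0: "emeasure M (R l \<inter> R n) = 0" using sb_disj that by simp
    have "emeasure M {z} \<le> emeasure M (R l \<inter> R n)"
      using that by (intro emeasure_mono) (auto intro!: R_sets)
    then show False using 0 z by (auto simp: atom_def)
  qed
  show ?thesis using ex un by blast
qed

lemma atom_fin: assumes z: "atom z" shows "emeasure M {z} < \<infinity>"
proof -
  obtain l where l: "l \<in> mor G" "z \<in> R l" using atom_in_R[OF z NK_zero] by blast
  have "emeasure M {z} \<le> emeasure M (R l)" using l by (intro emeasure_mono) (auto intro!: R_sets)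
  then show ?thesis using sb_Rfin[OF l(1)] by (rule le_less_trans)
qed

lemma emeasure_tau_single: assumes l: "l \<in> mor G" and x: "x \<in> D l" "{x} \<in> sets M"
  shows "emeasure M {\<tau> l x} = ennreal (\<Phi> l x) * emeasure M {x}"
proof -
  have "emeasure M (\<tau> l ` {x}) = (\<integral>\<^sup>+ y\<in>{x}. ennreal (\<Phi> l y) \<partial>M)"
    using x by (intro sb_img_meas[OF l]) auto
  also have "\<dots> = ennreal (\<Phi> l x) * emeasure M {x}"
    using x by (simp add: nn_integral_indicator_singleton)
  finally show ?thesis by simp
qed

lemma atom_tau: assumes l: "l \<in> mor G" and x: "atom x" "x \<in> D l" shows "atom (\<tau> l x)"
proof -
  have s: "{\<tau> l x} \<in> sets M" using sb_img[OF l, of "{x}"] x by (auto simp: atom_def)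
  have p: "0 < \<Phi> l x" using atom_AE[OF sb_Phi_pos[OF l] x(1)] x(2) by simp
  have "emeasure M {\<tau> l x} = ennreal (\<Phi> l x) * emeasure M {x}"
    using x by (intro emeasure_tau_single[OF l]) (auto simp: atom_def)
  moreover have "0 < ennreal (\<Phi> l x) * emeasure M {x}" using p x by (simp add: atom_def ennreal_zero_less_mult_iff)
  ultimately show ?thesis using s tau_space[OF l x(2)] by (simp add: atom_def)
qed

lemma atom_pre: assumes l: "l \<in> mor G" and z: "atom z" "z \<in> R l"
  shows "tc (dg G l) z \<in> D l \<and> \<tau> l (tc (dg G l) z) = z \<and> atom (tc (dg G l) z)"
proof -
  let ?w = "tc (dg G l) z"
  have w: "?w \<in> D l" "\<tau> l ?w = z" using R_iff[OF l] z by auto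
  have "\<tau> l -` {z} \<inter> space (restrict_space M (D l)) \<in> sets (restrict_space M (D l))"
    using z by (intro measurable_sets[OF sb_tau_meas[OF l]]) (auto simp: atom_def)
  moreover have "\<tau> l -` {z} \<inter> space (restrict_space M (D l)) = {?w}"
  proof (intro equalityI subsetI)
    fix v assume "v \<in> \<tau> l -` {z} \<inter> space (restrict_space M (D l))"
    then have "v \<in> D l" "\<tau> l v = \<tau> l ?w" using w by (auto simp: space_restrict_space)
    then show "v \<in> {?w}" using tau_inj[OF l _ w(1)] by simp
  next
    fix v assume "v \<in> {?w}"
    then show "v \<in> \<tau> l -` {z} \<inter> space (restrict_space M (D l))"
      using w D_space[OF l] by (auto simp: space_restrict_space)
  qed
  ultimately have ws: "{?w} \<in> sets M"
    using sb_D[OF l] by (simp add: sets_restrict_space_iff)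
  have "emeasure M {z} = ennreal (\<Phi> l ?w) * emeasure M {?w}"
    using emeasure_tau_single[OF l w(1) ws] w(2) by simp
  then have "emeasure M {?w} \<noteq> 0" using z by (auto simp: atom_def)
  then have "atom ?w" using ws w D_space[OF l] by (auto simp: atom_def zero_less_iff_neq_zero)
  then show ?thesis using w by simp
qed

lemma atom_comp: assumes a: "a \<in> mor G" and b: "b \<in> mor G" and ab: "src G a = rng G b"
  and z: "atom z" "z \<in> R (cmp G a b)"
  shows "\<exists>u. u \<in> D b \<and> \<tau> b u \<in> D a \<and> \<tau> a (\<tau> b u) = z"
proof -
  have c: "cmp G a b \<in> mor G" using a b ab by simp
  let ?u = "tc (dg G (cmp G a b)) z"
  have u: "?u \<in> D (cmp G a b)" "\<tau> (cmp G a b) ?u = z" "atom ?u" using atom_pre[OF c z] by auto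
  have "((?u \<in> D b \<and> \<tau> b ?u \<in> D a) \<longleftrightarrow> ?u \<in> D (cmp G a b)) \<and>
        (?u \<in> D (cmp G a b) \<longrightarrow> \<tau> a (\<tau> b ?u) = \<tau> (cmp G a b) ?u)"
    by (rule atom_AE[OF sb_comp[OF a b ab] u(3)])
  then have "?u \<in> D b \<and> \<tau> b ?u \<in> D a \<and> \<tau> a (\<tau> b ?u) = z" using u by simp
  then show ?thesis by (rule exI)
qed

lemma atom_comp_R: assumes a: "a \<in> mor G" and b: "b \<in> mor G" and ab: "src G a = rng G b"
  and z: "atom z" "z \<in> R (cmp G a b)"
  shows "z \<in> R a"
  using atom_comp[OF assms] unfolding Rg_def by blast

end


context kg begin

definition fac :: "'a \<Rightarrow> deg \<Rightarrow> deg \<Rightarrow> 'a \<times> 'a" where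
  "fac l m n = (THE p. fst p \<in> mor G \<and> snd p \<in> mor G \<and> src G (fst p) = rng G (snd p) \<and>
              dg G (fst p) = m \<and> dg G (snd p) = n \<and> cmp G (fst p) (snd p) = l)"

lemma fac_props: assumes "l \<in> mor G" "m \<in> NK k" "n \<in> NK k" "dg G l = dadd m n"
  shows "fst (fac l m n) \<in> mor G \<and> snd (fac l m n) \<in> mor G \<and> src G (fst (fac l m n)) = rng G (snd (fac l m n)) \<and>
              dg G (fst (fac l m n)) = m \<and> dg G (snd (fac l m n)) = n \<and> cmp G (fst (fac l m n)) (snd (fac l m n)) = l"
  unfolding fac_def by (rule theI'[OF fact_ex1[OF assms]])

end

context sb begin

definition lam :: "'x \<Rightarrow> deg \<Rightarrow> 'a" where
  "lam z m = (THE l. l \<in> mor G \<and> dg G l = m \<and> z \<in> R l)"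

lemma lam_props: assumes "atom z" "m \<in> NK k"
  shows "lam z m \<in> mor G \<and> dg G (lam z m) = m \<and> z \<in> R (lam z m)"
  unfolding lam_def by (rule theI'[OF atom_in_R[OF assms]])

lemma lam_eq: assumes z: "atom z" and l: "l \<in> mor G" "z \<in> R l" shows "lam z (dg G l) = l"
  unfolding lam_def by (rule the1_equality[OF atom_in_R[OF z dg_NK[OF l(1)]]]) (use l in simp)

lemma lam_fac: assumes z: "atom z" and a: "m \<in> NK k" "p \<in> NK k" "dle m p"
  shows "fst (fac (lam z p) m (dsub p m)) = lam z m \<and> snd (fac (lam z p) m (dsub p m)) \<in> mor G \<and>
    src G (lam z m) = rng G (snd (fac (lam z p) m (dsub p m))) \<and>
    dg G (snd (fac (lam z p) m (dsub p m))) = dsub p m \<and>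
    cmp G (lam z m) (snd (fac (lam z p) m (dsub p m))) = lam z p"
proof -
  have L: "lam z p \<in> mor G" "dg G (lam z p) = p" "z \<in> R (lam z p)" using lam_props[OF z a(2)] by auto
  have "dg G (lam z p) = dadd m (dsub p m)" using L(2) dadd_dsub[OF a(3)] by simp
  then have F: "fst (fac (lam z p) m (dsub p m)) \<in> mor G \<and> snd (fac (lam z p) m (dsub p m)) \<in> mor G \<and>
    src G (fst (fac (lam z p) m (dsub p m))) = rng G (snd (fac (lam z p) m (dsub p m))) \<and>
    dg G (fst (fac (lam z p) m (dsub p m))) = m \<and> dg G (snd (fac (lam z p) m (dsub p m))) = dsub p m \<and>
    cmp G (fst (fac (lam z p) m (dsub p m))) (snd (fac (lam z p) m (dsub p m))) = lam z p"
    using fac_props[OF L(1) a(1) NK_sub[OF a(2)]] by blast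
  have "z \<in> R (fst (fac (lam z p) m (dsub p m)))"
    using atom_comp_R[of "fst (fac (lam z p) m (dsub p m))" "snd (fac (lam z p) m (dsub p m))" z] F L(3) z by simp
  then have "lam z (dg G (fst (fac (lam z p) m (dsub p m)))) = fst (fac (lam z p) m (dsub p m))"
    using lam_eq[OF z] F by blast
  then have "fst (fac (lam z p) m (dsub p m)) = lam z m" using F by simp
  then show ?thesis using F by simp
qed

definition xz :: "'x \<Rightarrow> deg \<Rightarrow> deg \<Rightarrow> 'a" where
  "xz z = (\<lambda>m p. if m \<in> NK k \<and> p \<in> NK k \<and> dle m p then snd (fac (lam z p) m (dsub p m)) else undefined)"

lemma xz_at: assumes z: "atom z" and a: "m \<in> NK k" "p \<in> NK k" "dle m p"
  shows "xz z m p \<in> mor G \<and> src G (lam z m) = rng G (xz z m p) \<and> dg G (xz z m p) = dsub p m \<and>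
     cmp G (lam z m) (xz z m p) = lam z p"
proof -
  have "xz z m p = snd (fac (lam z p) m (dsub p m))" unfolding xz_def using a by simp
  then show ?thesis using lam_fac[OF z a] by simp
qed

lemma xz_undef: "\<not> (m \<in> NK k \<and> p \<in> NK k \<and> dle m p) \<Longrightarrow> xz z m p = undefined"
  unfolding xz_def by (rule if_not_P)

lemma xz_0: assumes z: "atom z" and p: "p \<in> NK k" shows "xz z dzero p = lam z p"
proof -
  have X: "xz z dzero p \<in> mor G" "src G (lam z dzero) = rng G (xz z dzero p)"
     "cmp G (lam z dzero) (xz z dzero p) = lam z p"
    using xz_at[OF z NK_zero p dle_zero] by auto
  have L0: "lam z dzero \<in> mor G" "dg G (lam z dzero) = dzero" using lam_props[OF z NK_zero] by auto
  have "lam z dzero = rng G (lam z dzero)" using dg0_vert[OF L0] .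
  moreover have "src G (rng G (lam z dzero)) = rng G (lam z dzero)" using vert[OF rng_vert[OF L0(1)]] by simp
  ultimately have "lam z dzero = rng G (xz z dzero p)" using X(2) by simp
  then show ?thesis using X(3) cmp_id(1)[OF X(1)] by simp
qed

lemma xz_path: assumes z: "atom z" shows "xz z \<in> S"
proof -
  have B: "xz z m p \<in> mor G \<and> dg G (xz z m p) = dsub p m"
    if a: "m \<in> NK k" "p \<in> NK k" "dle m p" for m p
    using xz_at[OF z a] by simp
  have C: "xz z m m \<in> vertices G" if m: "m \<in> NK k" for m
  proof -
    have X: "xz z m m \<in> mor G" "dg G (xz z m m) = dzero" using xz_at[OF z m m dle_refl] by auto
    have "xz z m m = rng G (xz z m m)" using dg0_vert[OF X] .
    then show ?thesis using rng_vert[OF X(1)] by simp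
  qed
  have D: "src G (xz z m n) = rng G (xz z n p) \<and> cmp G (xz z m n) (xz z n p) = xz z m p"
    if a: "m \<in> NK k" "n \<in> NK k" "p \<in> NK k" "dle m n" "dle n p" for m n p
  proof -
    have mp: "dle m p" using dle_trans a(4,5) by blast
    have X1: "xz z m n \<in> mor G" "src G (lam z m) = rng G (xz z m n)" "dg G (xz z m n) = dsub n m"
      "cmp G (lam z m) (xz z m n) = lam z n" using xz_at[OF z a(1,2,4)] by auto
    have X2: "xz z n p \<in> mor G" "src G (lam z n) = rng G (xz z n p)" "dg G (xz z n p) = dsub p n"
      "cmp G (lam z n) (xz z n p) = lam z p" using xz_at[OF z a(2,3,5)] by auto
    have X3: "xz z m p \<in> mor G" "src G (lam z m) = rng G (xz z m p)" "dg G (xz z m p) = dsub p m"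
      "cmp G (lam z m) (xz z m p) = lam z p" using xz_at[OF z a(1,3) mp] by auto
    have Lm: "lam z m \<in> mor G" using lam_props[OF z a(1)] by simp
    have s: "src G (xz z m n) = rng G (xz z n p)"
      using cmp_src[OF Lm X1(1) X1(2)] X1(4) X2(2) by simp
    have c: "cmp G (xz z m n) (xz z n p) \<in> mor G" using X1(1) X2(1) s by simp
    have "lam z p = cmp G (lam z m) (cmp G (xz z m n) (xz z n p))"
      using cmp_assoc[OF Lm X1(1) X2(1) X1(2) s] X1(4) X2(4) by simp
    moreover have "dg G (cmp G (xz z m n) (xz z n p)) = dsub p m"
      using X1(1,3) X2(1,3) s dsub_dsub[OF a(4,5)] by simp
    moreover have "src G (lam z m) = rng G (cmp G (xz z m n) (xz z n p))"
      using X1(1,2) X2(1) s by simp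
    ultimately have "xz z m p = cmp G (xz z m n) (xz z n p)"
      using fact_uniq[OF Lm X3(1) X3(2) Lm c] X3(3,4) by simp
    then show ?thesis using s by simp
  qed
  show ?thesis unfolding inf_paths_def mem_Collect_eq
  proof (intro conjI)
    show "\<forall>m p. \<not> (m \<in> NK k \<and> p \<in> NK k \<and> dle m p) \<longrightarrow> xz z m p = undefined"
      using xz_undef by blast
    show "\<forall>m\<in>NK k. \<forall>p\<in>NK k. dle m p \<longrightarrow> xz z m p \<in> mor G \<and> dg G (xz z m p) = dsub p m"
      using B by blast
    show "\<forall>m\<in>NK k. xz z m m \<in> vertices G" using C by blast
    show "\<forall>m\<in>NK k. \<forall>n\<in>NK k. \<forall>p\<in>NK k. dle m n \<and> dle n p \<longrightarrow>
     src G (xz z m n) = rng G (xz z n p) \<and> cmp G (xz z m n) (xz z n p) = xz z m p"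
      using D by blast
  qed
qed

lemma phi_unique: assumes z: "atom z" and x: "x \<in> S" "\<forall>n. z \<in> R (x dzero (diag k n))"
  shows "x = xz z"
proof (rule path_det[OF x(1) xz_path[OF z]])
  fix m assume m: "m \<in> NK k"
  obtain n where n: "dle m (diag k n)" using dle_diag[OF m] by blast
  have "x dzero (diag k n) \<in> mor G" "dg G (x dzero (diag k n)) = diag k n"
    using path_mor[OF x(1)] path_dg[OF x(1)] by auto
  then have "lam z (diag k n) = x dzero (diag k n)" using lam_eq[OF z, of "x dzero (diag k n)"] x(2) by simp
  then have "x dzero (diag k n) = xz z dzero (diag k n)" using xz_0[OF z NK_diag] by simp
  then show "\<exists>p\<in>NK k. dle m p \<and> x dzero p = xz z dzero p" using n by (intro bexI[of _ "diag k n"]) auto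
qed

lemma phi_xz: assumes z: "atom z" shows "phi k G D \<tau> z = xz z"
  unfolding phi_def
proof (rule the_equality)
  show "xz z \<in> S \<and> (\<forall>n. z \<in> R (xz z dzero (diag k n)))"
    using xz_path[OF z] xz_0[OF z NK_diag] lam_props[OF z NK_diag] by simp
  show "\<And>x. x \<in> S \<and> (\<forall>n. z \<in> R (x dzero (diag k n))) \<Longrightarrow> x = xz z"
    using phi_unique[OF z] by blast
qed

abbreviation "ph \<equiv> phi k G D \<tau>"

lemma phi_S: "atom z \<Longrightarrow> ph z \<in> S" using phi_xz xz_path by simp
lemma phi_0: "atom z \<Longrightarrow> p \<in> NK k \<Longrightarrow> ph z dzero p = lam z p" using phi_xz xz_0 by simp
lemma phi_char: assumes z: "atom z" and x: "x \<in> S" "\<forall>n. z \<in> R (x dzero (diag k n))" shows "ph z = x"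
  using phi_unique[OF z x] phi_xz[OF z] by simp

lemma phi_cyl: assumes z: "atom z" and l: "l \<in> mor G" shows "ph z \<in> cylinder k G l \<longleftrightarrow> z \<in> R l"
proof -
  have e: "ph z dzero (dg G l) = lam z (dg G l)" using phi_0[OF z dg_NK[OF l]] .
  show ?thesis
  proof
    assume "ph z \<in> cylinder k G l"
    then have "lam z (dg G l) = l" using e by (simp add: cylinder_def)
    then show "z \<in> R l" using lam_props[OF z dg_NK[OF l]] by simp
  next
    assume "z \<in> R l"
    then have "lam z (dg G l) = l" using lam_eq[OF z l] by simp
    then show "ph z \<in> cylinder k G l" using e phi_S[OF z] by (simp add: cylinder_def)
  qed
qed

lemma phi_shift: assumes l: "l \<in> mor G" and z: "atom z" "z \<in> D l"
  shows "shift k (dg G l) (ph (\<tau> l z)) = ph z"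
proof -
  let ?w = "\<tau> l z"
  let ?d = "dg G l"
  have d: "?d \<in> NK k" using l by simp
  have w: "atom ?w" using atom_tau[OF l z(1,2)] .
  have wR: "?w \<in> R l" unfolding Rg_def using z(2) by blast
  have Sw: "ph ?w \<in> S" using phi_S[OF w] .
  show ?thesis
  proof (rule phi_char[OF z(1) shift_in[OF Sw d], symmetric], intro allI)
    fix n
    let ?x = "ph ?w"
    let ?q = "dadd (diag k n) ?d"
    have q: "?q \<in> NK k" using d by simp
    have e1: "shift k ?d ?x dzero (diag k n) = ?x ?d ?q"
      using shift_at[OF NK_zero NK_diag dle_zero] by simp
    have dq: "dle ?d ?q" by simp
    have pc: "src G (?x dzero ?d) = rng G (?x ?d ?q) \<and> cmp G (?x dzero ?d) (?x ?d ?q) = ?x dzero ?q"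
      by (rule path_cmp[OF Sw NK_zero d q dle_zero dq])
    have x0d: "?x dzero ?d = l" using phi_0[OF w d] lam_eq[OF w l wR] by simp
    have nu: "?x ?d ?q \<in> mor G" using path_mor[OF Sw d q dq] .
    have "?w \<in> R (?x dzero ?q)" using phi_0[OF w q] lam_props[OF w q] by simp
    then have "?w \<in> R (cmp G l (?x ?d ?q))" using pc x0d by simp
    then obtain u where u: "u \<in> D (?x ?d ?q)" "\<tau> (?x ?d ?q) u \<in> D l" "\<tau> l (\<tau> (?x ?d ?q) u) = ?w"
      using atom_comp[OF l nu _ w] pc x0d by auto
    have "\<tau> (?x ?d ?q) u = z" using tau_inj[OF l u(2) z(2) u(3)] .
    then have "z \<in> R (?x ?d ?q)" unfolding Rg_def using u(1) by (metis image_eqI)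
    then show "z \<in> R (shift k ?d ?x dzero (diag k n))" using e1 by simp
  qed
qed

end


locale sby = sb k G M D \<tau> tc \<Phi> for k G M D \<tau> tc \<Phi> +
  fixes y
  assumes y: "atom y"
begin

primrec Itr where
  "Itr 0 = {y}"
| "Itr (Suc n) = Itr n \<union> (\<Union>l\<in>mor G. \<tau> l ` (Itr n \<inter> D l)) \<union> (\<Union>l\<in>mor G. tc (dg G l) ` (Itr n \<inter> R l))"

definition Orb where "Orb = (\<Union>n. Itr n)"

lemma Itr_atom: "z \<in> Itr n \<Longrightarrow> atom z"
proof (induction n arbitrary: z)
  case 0 then show ?case using y by simp
next
  case (Suc n)
  from Suc.prems consider "z \<in> Itr n" | l w where "l \<in> mor G" "w \<in> Itr n" "w \<in> D l" "z = \<tau> l w"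
    | l w where "l \<in> mor G" "w \<in> Itr n" "w \<in> R l" "z = tc (dg G l) w" by auto
  then show ?case
  proof cases
    case 1 then show ?thesis using Suc.IH by blast
  next
    case 2 then show ?thesis using Suc.IH[of w] atom_tau by blast
  next
    case 3 then show ?thesis using Suc.IH[of w] atom_pre by blast
  qed
qed

lemma Orb_atom: "z \<in> Orb \<Longrightarrow> atom z" unfolding Orb_def using Itr_atom by blast
lemma y_Orb: "y \<in> Orb" unfolding Orb_def using Itr.simps(1) by blast
lemma Orb_tau: assumes "z \<in> Orb" "l \<in> mor G" "z \<in> D l" shows "\<tau> l z \<in> Orb"
proof -
  obtain n where "z \<in> Itr n" using assms(1) unfolding Orb_def by blast
  then have "\<tau> l z \<in> Itr (Suc n)" using assms(2,3) by auto
  then show ?thesis unfolding Orb_def by blast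
qed
lemma Orb_tc: assumes "z \<in> Orb" "l \<in> mor G" "z \<in> R l" shows "tc (dg G l) z \<in> Orb"
proof -
  obtain n where "z \<in> Itr n" using assms(1) unfolding Orb_def by blast
  then have "tc (dg G l) z \<in> Itr (Suc n)" using assms(2,3) by auto
  then show ?thesis unfolding Orb_def by blast
qed

lemma Itr_count: "countable (Itr n)"
  by (induction n) (auto intro!: countable_UN[OF countable_mor])

lemma Orb_count: "countable Orb"
  unfolding Orb_def using Itr_count by auto

lemma Orb_sets: "Orb \<in> sets M"
  by (rule sets.countable[OF _ Orb_count]) (use Orb_atom in \<open>auto simp: atom_def\<close>)

lemma Orb_space: "Orb \<subseteq> space M" using Orb_atom by (auto simp: atom_def)

lemma Orb_orbit: assumes z: "z \<in> Orb" shows "ph z \<in> orbit k G (ph y)"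
proof -
  let ?x0 = "ph y"
  have "ph z \<in> orbit k G ?x0" if "z \<in> Itr n" for n
    using that
  proof (induction n arbitrary: z)
    case 0
    then have zy: "z = y" by simp
    have Sy: "ph y \<in> S" using phi_S[OF y] .
    let ?l = "ph y dzero dzero"
    have l: "?l \<in> mor G" "dg G ?l = dzero" using path_mor[OF Sy] path_dg[OF Sy] by auto
    show ?case unfolding orbit_def zy using Sy l by (intro CollectI conjI bexI[of _ ?l] bexI[of _ dzero]) auto
  next
    case (Suc n)
    from Suc.prems consider "z \<in> Itr n" | l w where "l \<in> mor G" "w \<in> Itr n" "w \<in> D l" "z = \<tau> l w"
      | l w where "l \<in> mor G" "w \<in> Itr n" "w \<in> R l" "z = tc (dg G l) w" by auto
    then show ?case
    proof cases
      case 1 then show ?thesis using Suc.IH by blast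
    next
      case 2
      have wa: "atom w" using Itr_atom[OF 2(2)] .
      have za: "atom z" using atom_tau[OF 2(1) wa 2(3)] 2(4) by simp
      have Sz: "ph z \<in> S" using phi_S[OF za] .
      have Sw: "ph w \<in> S" using phi_S[OF wa] .
      obtain l' n' where l': "l' \<in> mor G" "n' \<in> NK k" "ph w dzero (dg G l') = l'"
        "shift k (dg G l') (ph w) = shift k n' ?x0"
        using Suc.IH[OF 2(2)] unfolding orbit_def by blast
      let ?d = "dg G l" let ?d' = "dg G l'"
      have d: "?d \<in> NK k" "?d' \<in> NK k" using 2(1) l'(1) by auto
      have sh: "shift k ?d (ph z) = ph w" using phi_shift[OF 2(1) wa 2(3)] 2(4) by simp
      let ?l = "ph z dzero (dadd ?d' ?d)"
      have l: "?l \<in> mor G" "dg G ?l = dadd ?d' ?d" using path_mor[OF Sz] path_dg[OF Sz] d by auto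
      have "shift k (dg G ?l) (ph z) = shift k n' ?x0"
        using l(2) shift_shift[OF d(2), of ?d "ph z"] sh l'(4) by simp
      then show ?thesis unfolding orbit_def using Sz l l'(2)
        by (intro CollectI conjI bexI[of _ ?l] bexI[of _ n']) auto
    next
      case 3
      have wa: "atom w" using Itr_atom[OF 3(2)] .
      have zz: "z \<in> D l" "\<tau> l z = w" "atom z" using atom_pre[OF 3(1) wa 3(3)] 3(4) by auto
      have Sz: "ph z \<in> S" using phi_S[OF zz(3)] .
      obtain l' n' where l': "l' \<in> mor G" "n' \<in> NK k" "ph w dzero (dg G l') = l'"
        "shift k (dg G l') (ph w) = shift k n' ?x0"
        using Suc.IH[OF 3(2)] unfolding orbit_def by blast
      let ?d = "dg G l" let ?d' = "dg G l'"
      have d: "?d \<in> NK k" "?d' \<in> NK k" using 3(1) l'(1) by auto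
      have sh: "shift k ?d (ph w) = ph z" using phi_shift[OF 3(1) zz(3) zz(1)] zz(2) by simp
      let ?l = "ph z dzero ?d'"
      have l: "?l \<in> mor G" "dg G ?l = ?d'" using path_mor[OF Sz] path_dg[OF Sz] d by auto
      have "shift k ?d' (ph z) = shift k ?d' (shift k ?d (ph w))" using sh by simp
      also have "\<dots> = shift k (dadd ?d' ?d) (ph w)" by (rule shift_shift[OF d(2)])
      also have "\<dots> = shift k (dadd ?d ?d') (ph w)" using dadd_comm by metis
      also have "\<dots> = shift k ?d (shift k ?d' (ph w))" by (rule shift_shift[OF d(1), symmetric])
      also have "\<dots> = shift k ?d (shift k n' ?x0)" using l'(4) by simp
      also have "\<dots> = shift k (dadd ?d n') ?x0" by (rule shift_shift[OF d(1)])
      finally have "shift k (dg G ?l) (ph z) = shift k (dadd ?d n') ?x0" using l(2) by simp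
      then show ?thesis unfolding orbit_def using Sz l l'(2) d
        by (intro CollectI conjI bexI[of _ ?l] bexI[of _ "dadd ?d n'"]) auto
    qed
  qed
  then show ?thesis using z unfolding Orb_def by blast
qed

end


context sb begin

definition tp :: "'a \<Rightarrow> 'x \<Rightarrow> 'x \<Rightarrow> 'x" where
  "tp l c x = (if x \<in> D l then \<tau> l x else c)"

lemma tp_meas: assumes l: "l \<in> mor G" and c: "c \<in> space M" shows "tp l c \<in> M \<rightarrow>\<^sub>M M"
  unfolding tp_def
proof (subst measurable_If_restrict_space_iff)
  show "{x \<in> space M. x \<in> D l} \<in> sets M" using sb_D[OF l] D_space[OF l] by (simp add: Int_absorb1 Collect_conj_eq Int_commute)
  show "\<tau> l \<in> restrict_space M {x. x \<in> D l} \<rightarrow>\<^sub>M M \<and> (\<lambda>x. c) \<in> restrict_space M {x. x \<notin> D l} \<rightarrow>\<^sub>M M"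
    using sb_tau_meas[OF l] c by simp
qed

definition g1 :: "'a \<Rightarrow> 'x \<Rightarrow> real" where "g1 l w = indicator (D l) w * \<Phi> l w"

lemma g1_meas[measurable]: "l \<in> mor G \<Longrightarrow> g1 l \<in> borel_measurable M"
  unfolding g1_def using sb_D by measurable
lemma g1_nn: "l \<in> mor G \<Longrightarrow> 0 \<le> g1 l w"
  unfolding g1_def using sb_Phi_nn by simp

lemma distr_eq: assumes l: "l \<in> mor G" and c: "c \<in> space M"
  shows "distr (density M (\<lambda>w. ennreal (g1 l w))) M (tp l c) = density M (\<lambda>x. ennreal (indicator (R l) x))"
proof (rule measure_eqI)
  show "sets (distr (density M (\<lambda>w. ennreal (g1 l w))) M (tp l c)) = sets (density M (\<lambda>x. ennreal (indicator (R l) x)))" by simp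
  fix A assume "A \<in> sets (distr (density M (\<lambda>w. ennreal (g1 l w))) M (tp l c))"
  then have A: "A \<in> sets M" by simp
  have tpm: "tp l c \<in> density M (\<lambda>w. ennreal (g1 l w)) \<rightarrow>\<^sub>M M"
    using tp_meas[OF l c] by (subst measurable_cong_sets[OF sets_density refl])
  let ?B = "{w \<in> D l. \<tau> l w \<in> A}"
  have B1: "?B = \<tau> l -` A \<inter> space (restrict_space M (D l))"
    using D_space[OF l] by (auto simp: space_restrict_space)
  have "\<tau> l -` A \<inter> space (restrict_space M (D l)) \<in> sets (restrict_space M (D l))"
    by (rule measurable_sets[OF sb_tau_meas[OF l] A])
  then have B: "?B \<in> sets M" unfolding B1[symmetric] using sb_D[OF l] by (simp add: sets_restrict_space_iff)
  have img: "\<tau> l ` ?B = A \<inter> R l" unfolding Rg_def by auto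
  have "emeasure (distr (density M (\<lambda>w. ennreal (g1 l w))) M (tp l c)) A = emeasure (density M (\<lambda>w. ennreal (g1 l w))) (tp l c -` A \<inter> space M)"
    using emeasure_distr[OF tpm A] by simp
  also have "\<dots> = (\<integral>\<^sup>+ w. ennreal (g1 l w) * indicator (tp l c -` A \<inter> space M) w \<partial>M)"
    using measurable_sets[OF tp_meas[OF l c] A] l by (intro emeasure_density) auto
  also have "\<dots> = (\<integral>\<^sup>+ w. ennreal (\<Phi> l w) * indicator ?B w \<partial>M)"
    by (intro nn_integral_cong) (auto simp: g1_def tp_def split: split_indicator)
  also have "\<dots> = emeasure M (\<tau> l ` ?B)"
    using sb_img_meas[OF l B] by simp
  also have "\<dots> = emeasure M (A \<inter> R l)" using img by simp
  also have "\<dots> = (\<integral>\<^sup>+ x. ennreal (indicator (R l) x) * indicator A x \<partial>M)"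
  proof -
    have "(\<integral>\<^sup>+ x. ennreal (indicator (R l) x) * indicator A x \<partial>M) = (\<integral>\<^sup>+ x. indicator (A \<inter> R l) x \<partial>M)"
      by (intro nn_integral_cong) (auto split: split_indicator)
    also have "\<dots> = emeasure M (A \<inter> R l)" using A R_sets[OF l] by simp
    finally show ?thesis by simp
  qed
  also have "\<dots> = emeasure (density M (\<lambda>x. ennreal (indicator (R l) x))) A"
    using A R_sets[OF l] by (intro emeasure_density[symmetric]) auto
  finally show "emeasure (distr (density M (\<lambda>w. ennreal (g1 l w))) M (tp l c)) A = emeasure (density M (\<lambda>x. ennreal (indicator (R l) x))) A" .
qed

lemma cv_integral:
  fixes h :: "'x \<Rightarrow> 'b::{banach, second_countable_topology}"
  assumes l: "l \<in> mor G" and c: "c \<in> space M" and h[measurable]: "h \<in> borel_measurable M"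
  shows "(LINT x|M. indicator (R l) x *\<^sub>R h x) = (LINT w|M. g1 l w *\<^sub>R h (tp l c w))"
proof -
  have [measurable]: "R l \<in> sets M" using R_sets[OF l] .
  have [measurable]: "tp l c \<in> M \<rightarrow>\<^sub>M M" using tp_meas[OF l c] .
  have [measurable]: "g1 l \<in> borel_measurable M" using g1_meas[OF l] .
  have "(LINT x|M. indicator (R l) x *\<^sub>R h x) = integral\<^sup>L (density M (\<lambda>x. ennreal (indicator (R l) x))) h"
    by (rule integral_density[symmetric]) auto
  also have "\<dots> = integral\<^sup>L (distr (density M (\<lambda>w. ennreal (g1 l w))) M (tp l c)) h" using distr_eq[OF l c] by simp
  also have "\<dots> = integral\<^sup>L (density M (\<lambda>w. ennreal (g1 l w))) (\<lambda>w. h (tp l c w))"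
    by (rule integral_distr) (subst measurable_cong_sets[OF sets_density refl], rule tp_meas[OF l c], simp)
  also have "\<dots> = (LINT w|M. g1 l w *\<^sub>R h (tp l c w))"
    using g1_nn[OF l] by (intro integral_density) auto
  finally show ?thesis .
qed

lemma cv_integrable:
  fixes h :: "'x \<Rightarrow> 'b::{banach, second_countable_topology}"
  assumes l: "l \<in> mor G" and c: "c \<in> space M" and h[measurable]: "h \<in> borel_measurable M"
  shows "integrable M (\<lambda>x. indicator (R l) x *\<^sub>R h x) \<longleftrightarrow> integrable M (\<lambda>w. g1 l w *\<^sub>R h (tp l c w))"
proof -
  have [measurable]: "R l \<in> sets M" using R_sets[OF l] .
  have [measurable]: "tp l c \<in> M \<rightarrow>\<^sub>M M" using tp_meas[OF l c] .
  have [measurable]: "g1 l \<in> borel_measurable M" using g1_meas[OF l] .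
  have "integrable M (\<lambda>x. indicator (R l) x *\<^sub>R h x) \<longleftrightarrow> integrable (density M (\<lambda>x. ennreal (indicator (R l) x))) h"
    by (rule integrable_density[symmetric]) auto
  also have "\<dots> \<longleftrightarrow> integrable (distr (density M (\<lambda>w. ennreal (g1 l w))) M (tp l c)) h" using distr_eq[OF l c] by simp
  also have "\<dots> \<longleftrightarrow> integrable (density M (\<lambda>w. ennreal (g1 l w))) (\<lambda>w. h (tp l c w))"
    by (rule integrable_distr_eq) (subst measurable_cong_sets[OF sets_density refl], rule tp_meas[OF l c], simp)
  also have "\<dots> \<longleftrightarrow> integrable M (\<lambda>w. g1 l w *\<^sub>R h (tp l c w))"
    using g1_nn[OF l] by (intro integrable_density) auto
  finally show ?thesis .
qed

end


lemma cmod_add_sq: "(cmod (a + b))\<^sup>2 \<le> 2 * (cmod a)\<^sup>2 + 2 * (cmod b)\<^sup>2"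
proof -
  have "cmod (a + b) \<le> cmod a + cmod b" by (rule norm_triangle_ineq)
  then have "(cmod (a + b))\<^sup>2 \<le> (cmod a + cmod b)\<^sup>2" by (simp add: power_mono)
  also have "\<dots> \<le> 2 * (cmod a)\<^sup>2 + 2 * (cmod b)\<^sup>2"
  proof -
    have h: "0 \<le> (cmod a - cmod b)\<^sup>2" by simp
    then show ?thesis unfolding power2_diff power2_sum by linarith
  qed
  finally show ?thesis .
qed

lemma L2_I: "f \<in> borel_measurable M \<Longrightarrow> integrable M (\<lambda>x. (cmod (f x))\<^sup>2) \<Longrightarrow> f \<in> L2 M"
  by (simp add: L2_def)
lemma L2_meas: "f \<in> L2 M \<Longrightarrow> f \<in> borel_measurable M" by (simp add: L2_def)
lemma L2_int: "f \<in> L2 M \<Longrightarrow> integrable M (\<lambda>x. (cmod (f x))\<^sup>2)" by (simp add: L2_def)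

lemma L2_add: assumes f: "f \<in> L2 M" and g: "g \<in> L2 M" shows "(\<lambda>x. f x + g x) \<in> L2 M"
proof (rule L2_I)
  have [measurable]: "f \<in> borel_measurable M" "g \<in> borel_measurable M" using f g by (auto simp: L2_def)
  show "(\<lambda>x. f x + g x) \<in> borel_measurable M" by measurable
  show "integrable M (\<lambda>x. (cmod (f x + g x))\<^sup>2)"
  proof (rule Bochner_Integration.integrable_bound)
    show "integrable M (\<lambda>x. 2 * (cmod (f x))\<^sup>2 + 2 * (cmod (g x))\<^sup>2)"
      using L2_int[OF f] L2_int[OF g] by auto
    show "(\<lambda>x. (cmod (f x + g x))\<^sup>2) \<in> borel_measurable M" by measurable
    show "AE x in M. norm ((cmod (f x + g x))\<^sup>2) \<le> norm (2 * (cmod (f x))\<^sup>2 + 2 * (cmod (g x))\<^sup>2)"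
    proof (rule AE_I2)
      fix x
      have "0 \<le> (cmod (f x + g x))\<^sup>2" "0 \<le> 2 * (cmod (f x))\<^sup>2 + 2 * (cmod (g x))\<^sup>2" by auto
      then show "norm ((cmod (f x + g x))\<^sup>2) \<le> norm (2 * (cmod (f x))\<^sup>2 + 2 * (cmod (g x))\<^sup>2)"
        using cmod_add_sq[of "f x" "g x"] by (simp only: real_norm_def abs_of_nonneg)
    qed
  qed
qed

lemma L2_scale: assumes f: "f \<in> L2 M" shows "(\<lambda>x. c * f x) \<in> L2 M"
proof (rule L2_I)
  have [measurable]: "f \<in> borel_measurable M" using f by (auto simp: L2_def)
  show "(\<lambda>x. c * f x) \<in> borel_measurable M" by measurable
  have "integrable M (\<lambda>x. (cmod c)\<^sup>2 * (cmod (f x))\<^sup>2)" using L2_int[OF f] by auto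
  then show "integrable M (\<lambda>x. (cmod (c * f x))\<^sup>2)" by (simp add: norm_mult power_mult_distrib)
qed

lemma L2_diff: assumes f: "f \<in> L2 M" and g: "g \<in> L2 M" shows "(\<lambda>x. f x - g x) \<in> L2 M"
  using L2_add[OF f L2_scale[OF g, of "-1"]] by simp

lemma L2_zero: "(\<lambda>x. 0) \<in> L2 M" by (simp add: L2_def)

lemma L2_sum: "finite H \<Longrightarrow> (\<And>i. i \<in> H \<Longrightarrow> F i \<in> L2 M) \<Longrightarrow> (\<lambda>x. \<Sum>i\<in>H. F i x) \<in> L2 M"
proof (induction H rule: finite_induct)
  case empty then show ?case using L2_zero by simp
next
  case (insert a H) then show ?case using L2_add[of "F a" M "\<lambda>x. \<Sum>i\<in>H. F i x"] by simp
qed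

lemma L2_ind: assumes A: "A \<in> sets M" and fin: "emeasure M A < \<infinity>"
  shows "(\<lambda>x. complex_of_real (indicator A x)) \<in> L2 M"
proof (rule L2_I)
  show "(\<lambda>x. complex_of_real (indicator A x)) \<in> borel_measurable M" using A by measurable
  have "(\<lambda>x. (cmod (complex_of_real (indicator A x)))\<^sup>2) = indicator A"
    by (auto simp: fun_eq_iff split: split_indicator)
  moreover have "integrable M (indicator A :: _ \<Rightarrow> real)" using A fin by simp
  ultimately show "integrable M (\<lambda>x. (cmod (complex_of_real (indicator A x)))\<^sup>2)" by simp
qed

lemma L2_mult_ind: assumes A: "A \<in> sets M" and f: "f \<in> L2 M"
  shows "(\<lambda>x. complex_of_real (indicator A x) * f x) \<in> L2 M"
proof (rule L2_I)
  have [measurable]: "f \<in> borel_measurable M" using f by (auto simp: L2_def)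
  show "(\<lambda>x. complex_of_real (indicator A x) * f x) \<in> borel_measurable M" using A by measurable
  have "integrable M (\<lambda>x. indicator A x *\<^sub>R (cmod (f x))\<^sup>2)"
    using integrable_mult_indicator[OF A L2_int[OF f]] .
  moreover have "(\<lambda>x. indicator A x *\<^sub>R (cmod (f x))\<^sup>2) = (\<lambda>x. (cmod (complex_of_real (indicator A x) * f x))\<^sup>2)"
    by (auto simp: fun_eq_iff split: split_indicator)
  ultimately show "integrable M (\<lambda>x. (cmod (complex_of_real (indicator A x) * f x))\<^sup>2)" by simp
qed

lemma aeq_refl: "aeq M f f" by (simp add: aeq_def)

lemma integral_single:
  fixes v :: "'b::{banach, second_countable_topology}"
  assumes a: "{a} \<in> sets M" "emeasure M {a} < \<infinity>"
  shows "(LINT x|M. indicator {a} x *\<^sub>R v) = measure M {a} *\<^sub>R v"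
proof -
  have "integrable M (indicator {a} :: _ \<Rightarrow> real)" using a by simp
  then have "(LINT x|M. indicator {a} x *\<^sub>R v) = (LINT x|M. indicator {a} x) *\<^sub>R v"
    by (rule integral_scaleR_left)
  also have "(LINT x|M. indicator {a} x) = measure M ({a} \<inter> space M)" by (rule Bochner_Integration.integral_indicator)
  also have "{a} \<inter> space M = {a}" using sets.sets_into_space[OF a(1)] by auto
  finally show ?thesis .
qed


lemma mult_inv_sqrt: "0 \<le> (a::real) \<Longrightarrow> a * (1 / sqrt a) = sqrt a"
  using real_div_sqrt[of a] by simp

lemma borel_measurable_cnj[measurable]: "f \<in> borel_measurable M \<Longrightarrow> (\<lambda>x. cnj (f x)) \<in> borel_measurable M"
  by (rule borel_measurable_continuous_on[OF continuous_on_cnj[OF continuous_on_id]])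

context sb begin

abbreviation "Sl \<equiv> Sop G D \<tau> tc \<Phi>"

lemma tc_meas_l[measurable]: "l \<in> mor G \<Longrightarrow> tc (dg G l) \<in> M \<rightarrow>\<^sub>M M"
  by (rule sb_tc_meas[OF dg_NK])
lemma R_meas[measurable]: "l \<in> mor G \<Longrightarrow> R l \<in> sets M" by (rule R_sets)
lemma D_meas[measurable]: "l \<in> mor G \<Longrightarrow> D l \<in> sets M" by (rule sb_D)

lemma Sop_eq: "Sl l f = (\<lambda>x. indicator (R l) x *\<^sub>R (complex_of_real (1 / sqrt (\<Phi> l (tc (dg G l) x))) * f (tc (dg G l) x)))"
  unfolding Sop_def by (auto simp: fun_eq_iff split: split_indicator)

lemma Sop_meas: assumes l: "l \<in> mor G" and f[measurable]: "f \<in> borel_measurable M"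
  shows "Sl l f \<in> borel_measurable M"
  unfolding Sop_eq using l by measurable

lemma Sop_L2: assumes l: "l \<in> mor G" and c: "c \<in> space M" and f: "f \<in> L2 M" shows "Sl l f \<in> L2 M"
proof (rule L2_I)
  have fm[measurable]: "f \<in> borel_measurable M" using L2_meas[OF f] .
  show "Sl l f \<in> borel_measurable M" using Sop_meas[OF l fm] .
  let ?h = "\<lambda>x. (cmod (f (tc (dg G l) x)))\<^sup>2 / \<Phi> l (tc (dg G l) x)"
  have hm: "?h \<in> borel_measurable M" using l by measurable
  have e1: "(\<lambda>x. (cmod (Sl l f x))\<^sup>2) = (\<lambda>x. indicator (R l) x *\<^sub>R ?h x)"
  proof
    fix x
    have "0 \<le> \<Phi> l (tc (dg G l) x)" using sb_Phi_nn[OF l] .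
    then show "(cmod (Sl l f x))\<^sup>2 = indicator (R l) x *\<^sub>R ?h x"
      unfolding Sop_eq by (auto simp: norm_mult norm_divide power_mult_distrib power_divide split: split_indicator)
  qed
  have ae: "AE w in M. indicator (D l) w *\<^sub>R (cmod (f w))\<^sup>2 = g1 l w *\<^sub>R ?h (tp l c w)"
    using sb_Phi_pos[OF l]
  proof (rule AE_mp, intro AE_I2 impI)
    fix w assume p: "w \<in> D l \<longrightarrow> 0 < \<Phi> l w"
    show "indicator (D l) w *\<^sub>R (cmod (f w))\<^sup>2 = g1 l w *\<^sub>R ?h (tp l c w)"
    proof (cases "w \<in> D l")
      case True
      then show ?thesis using p sb_tc_tau[OF l True] by (simp add: g1_def tp_def)
    next
      case False then show ?thesis by (simp add: g1_def)
    qed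
  qed
  have ii: "integrable M (\<lambda>w. indicator (D l) w *\<^sub>R (cmod (f w))\<^sup>2)"
    using integrable_mult_indicator[OF sb_D[OF l] L2_int[OF f]] .
  have [measurable]: "tp l c \<in> M \<rightarrow>\<^sub>M M" using tp_meas[OF l c] .
  have mm: "(\<lambda>w. g1 l w *\<^sub>R ?h (tp l c w)) \<in> borel_measurable M" using l by measurable
  have "integrable M (\<lambda>w. g1 l w *\<^sub>R ?h (tp l c w))"
    by (rule integrable_cong_AE_imp[OF ii mm ae])
  then have "integrable M (\<lambda>x. indicator (R l) x *\<^sub>R ?h x)" using cv_integrable[OF l c hm] by simp
  then show "integrable M (\<lambda>x. (cmod (Sl l f x))\<^sup>2)" using e1 by simp
qed

definition T0 :: "'a \<Rightarrow> 'x \<Rightarrow> ('x \<Rightarrow> complex) \<Rightarrow> 'x \<Rightarrow> complex" where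
  "T0 l c g = (\<lambda>w. complex_of_real (indicator (D l) w * sqrt (\<Phi> l w)) * g (tp l c w))"

lemma T0_L2: assumes l: "l \<in> mor G" and c: "c \<in> space M" and g: "g \<in> L2 M" shows "T0 l c g \<in> L2 M"
proof (rule L2_I)
  have gm[measurable]: "g \<in> borel_measurable M" using L2_meas[OF g] .
  have [measurable]: "tp l c \<in> M \<rightarrow>\<^sub>M M" using tp_meas[OF l c] .
  show "T0 l c g \<in> borel_measurable M" unfolding T0_def using l by measurable
  have hm: "(\<lambda>x. (cmod (g x))\<^sup>2) \<in> borel_measurable M" by measurable
  have "integrable M (\<lambda>x. indicator (R l) x *\<^sub>R (cmod (g x))\<^sup>2)"
    using integrable_mult_indicator[OF R_sets[OF l] L2_int[OF g]] .
  then have "integrable M (\<lambda>w. g1 l w *\<^sub>R (cmod (g (tp l c w)))\<^sup>2)" using cv_integrable[OF l c hm] by simp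
  moreover have "(\<lambda>w. g1 l w *\<^sub>R (cmod (g (tp l c w)))\<^sup>2) = (\<lambda>w. (cmod (T0 l c g w))\<^sup>2)"
  proof
    fix w
    have "0 \<le> \<Phi> l w" using sb_Phi_nn[OF l] .
    then show "g1 l w *\<^sub>R (cmod (g (tp l c w)))\<^sup>2 = (cmod (T0 l c g w))\<^sup>2"
      unfolding T0_def g1_def by (auto simp: norm_mult power_mult_distrib split: split_indicator)
  qed
  ultimately show "integrable M (\<lambda>w. (cmod (T0 l c g w))\<^sup>2)" by simp
qed

lemma adj_T0: assumes l: "l \<in> mor G" and c: "c \<in> space M" and f: "f \<in> L2 M" and g: "g \<in> L2 M"
  shows "ip M (Sl l f) g = ip M f (T0 l c g)"
proof -
  have fm[measurable]: "f \<in> borel_measurable M" using L2_meas[OF f] .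
  have gm[measurable]: "g \<in> borel_measurable M" using L2_meas[OF g] .
  let ?h = "\<lambda>x. complex_of_real (1 / sqrt (\<Phi> l (tc (dg G l) x))) * f (tc (dg G l) x) * cnj (g x)"
  have hm: "?h \<in> borel_measurable M" using l by measurable
  have "(\<lambda>x. Sl l f x * cnj (g x)) = (\<lambda>x. indicator (R l) x *\<^sub>R ?h x)"
    unfolding Sop_eq by (auto simp: fun_eq_iff split: split_indicator)
  then have "ip M (Sl l f) g = (LINT x|M. indicator (R l) x *\<^sub>R ?h x)"
    unfolding ip_def by simp
  also have "\<dots> = (LINT w|M. g1 l w *\<^sub>R ?h (tp l c w))" by (rule cv_integral[OF l c hm])
  also have "\<dots> = (LINT w|M. f w * cnj (T0 l c g w))"
  proof (intro Bochner_Integration.integral_cong refl)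
    fix w assume "w \<in> space M"
    show "g1 l w *\<^sub>R ?h (tp l c w) = f w * cnj (T0 l c g w)"
    proof (cases "w \<in> D l")
      case True
      have p: "0 \<le> \<Phi> l w" using sb_Phi_nn[OF l] .
      have e: "\<Phi> l w * (1 / sqrt (\<Phi> l w)) = sqrt (\<Phi> l w)" using mult_inv_sqrt[OF p] .
      have "g1 l w *\<^sub>R ?h (tp l c w) = complex_of_real (\<Phi> l w * (1 / sqrt (\<Phi> l w))) * f w * cnj (g (\<tau> l w))"
        using True sb_tc_tau[OF l True] by (simp add: g1_def tp_def scaleR_conv_of_real)
      also have "\<dots> = f w * cnj (T0 l c g w)"
        unfolding e using True by (simp add: T0_def tp_def)
      finally show ?thesis .
    next
      case False then show ?thesis by (simp add: g1_def T0_def)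
    qed
  qed
  finally show ?thesis unfolding ip_def .
qed

lemma adj_ok: assumes l: "l \<in> mor G" and c: "c \<in> space M"
  shows "(\<forall>f\<in>L2 M. adj M (Sl l) f \<in> L2 M) \<and> (\<forall>f\<in>L2 M. \<forall>g\<in>L2 M. ip M (Sl l f) g = ip M f (adj M (Sl l) g))"
proof -
  have "\<exists>T'. (\<forall>f\<in>L2 M. T' f \<in> L2 M) \<and> (\<forall>f\<in>L2 M. \<forall>g\<in>L2 M. ip M (Sl l f) g = ip M f (T' g))"
    using T0_L2[OF l c] adj_T0[OF l c] by blast
  from someI_ex[OF this] show ?thesis unfolding adj_def .
qed

end


lemma ip_single: assumes a: "{a} \<in> sets M" "emeasure M {a} < \<infinity>"
  shows "ip M (\<lambda>x. v * complex_of_real (indicator {a} x)) g = measure M {a} *\<^sub>R (v * cnj (g a))"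
proof -
  have "(\<lambda>x. (v * complex_of_real (indicator {a} x)) * cnj (g x)) = (\<lambda>x. indicator {a} x *\<^sub>R (v * cnj (g a)))"
    by (auto simp: fun_eq_iff split: split_indicator)
  then show ?thesis unfolding ip_def using integral_single[OF a, of "v * cnj (g a)"] by simp
qed

context sb begin

lemma atom_measure_pos: "atom w \<Longrightarrow> 0 < measure M {w}"
  using atom_fin[of w] by (auto simp: atom_def measure_def enn2real_positive_iff)

lemma Sop_single: assumes l: "l \<in> mor G" and w: "w \<in> D l"
  shows "Sl l (\<lambda>x. complex_of_real (indicator {w} x)) =
    (\<lambda>x. complex_of_real (1 / sqrt (\<Phi> l w)) * complex_of_real (indicator {\<tau> l w} x))"
proof
  fix x
  have tw: "\<tau> l w \<in> R l" unfolding Rg_def using w by blast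
  have tct: "tc (dg G l) (\<tau> l w) = w" using sb_tc_tau[OF l w] .
  show "Sl l (\<lambda>x. complex_of_real (indicator {w} x)) x =
    complex_of_real (1 / sqrt (\<Phi> l w)) * complex_of_real (indicator {\<tau> l w} x)"
  proof (cases "x \<in> R l")
    case True
    then have x: "tc (dg G l) x \<in> D l" "\<tau> l (tc (dg G l) x) = x" using R_iff[OF l] by auto
    show ?thesis
    proof (cases "tc (dg G l) x = w")
      case True2: True
      then have "x = \<tau> l w" using x by simp
      then show ?thesis using True True2 by (simp add: Sop_def)
    next
      case False
      then have "x \<noteq> \<tau> l w" using tct by auto
      then show ?thesis using True False by (simp add: Sop_def)
    qed
  next
    case False
    then have "x \<noteq> \<tau> l w" using tw by auto
    then show ?thesis using False by (simp add: Sop_def)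
  qed
qed

lemma measure_tau_single: assumes l: "l \<in> mor G" and w: "atom w" "w \<in> D l"
  shows "measure M {\<tau> l w} = \<Phi> l w * measure M {w}"
proof -
  have "emeasure M {\<tau> l w} = ennreal (\<Phi> l w) * emeasure M {w}"
    using emeasure_tau_single[OF l w(2)] w(1) by (simp add: atom_def)
  then show ?thesis using sb_Phi_nn[OF l] by (simp add: measure_def enn2real_mult)
qed

lemma adj_at: assumes l: "l \<in> mor G" and c: "c \<in> space M" and w: "atom w" "w \<in> D l" and g: "g \<in> L2 M"
  shows "adj M (Sl l) g w = complex_of_real (sqrt (\<Phi> l w)) * g (\<tau> l w)"
proof -
  let ?T = "adj M (Sl l)"
  let ?iw = "\<lambda>x. complex_of_real (indicator {w} x)"
  have ws: "{w} \<in> sets M" "emeasure M {w} < \<infinity>" using w(1) atom_fin[OF w(1)] by (auto simp: atom_def)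
  have tw: "atom (\<tau> l w)" using atom_tau[OF l w] .
  have tws: "{\<tau> l w} \<in> sets M" "emeasure M {\<tau> l w} < \<infinity>" using tw atom_fin[OF tw] by (auto simp: atom_def)
  have iw: "?iw \<in> L2 M" using L2_ind[OF ws] .
  have E: "ip M (Sl l ?iw) g = ip M ?iw (?T g)" using adj_ok[OF l c] iw g by blast
  let ?m = "measure M {w}" let ?p = "\<Phi> l w"
  have m: "0 < ?m" using atom_measure_pos[OF w(1)] .
  have p: "0 < ?p" using atom_AE[OF sb_Phi_pos[OF l] w(1)] w(2) by simp
  have "ip M (Sl l ?iw) g = measure M {\<tau> l w} *\<^sub>R (complex_of_real (1 / sqrt ?p) * cnj (g (\<tau> l w)))"
    unfolding Sop_single[OF l w(2)] by (rule ip_single[OF tws])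
  also have "\<dots> = complex_of_real ?m * (complex_of_real (?p * (1 / sqrt ?p)) * cnj (g (\<tau> l w)))"
    using measure_tau_single[OF l w] by (simp add: scaleR_conv_of_real algebra_simps)
  also have "\<dots> = complex_of_real ?m * (complex_of_real (sqrt ?p) * cnj (g (\<tau> l w)))"
    using mult_inv_sqrt[of ?p] p by simp
  finally have L: "ip M (Sl l ?iw) g = complex_of_real ?m * (complex_of_real (sqrt ?p) * cnj (g (\<tau> l w)))" .
  have "ip M ?iw (?T g) = ip M (\<lambda>x. 1 * complex_of_real (indicator {w} x)) (?T g)" by simp
  also have "\<dots> = ?m *\<^sub>R (1 * cnj (?T g w))" by (rule ip_single[OF ws])
  finally have Rr: "ip M ?iw (?T g) = complex_of_real ?m * cnj (?T g w)" by (simp add: scaleR_conv_of_real)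
  have "complex_of_real ?m \<noteq> 0" using m by simp
  then have "cnj (?T g w) = complex_of_real (sqrt ?p) * cnj (g (\<tau> l w))"
    using E L Rr by (metis mult_left_cancel)
  then have "cnj (cnj (?T g w)) = cnj (complex_of_real (sqrt ?p) * cnj (g (\<tau> l w)))" by simp
  then show ?thesis by simp
qed

lemma P_cyl_at:
  assumes H: "\<forall>f\<in>L2 M. aeq M (P (cylinder k G l) f) (Sl l (adj M (Sl l) f))"
    and l: "l \<in> mor G" and c: "c \<in> space M" and f: "f \<in> L2 M" and z: "atom z"
  shows "P (cylinder k G l) f z = (if z \<in> R l then f z else 0)"
proof -
  have "AE x in M. P (cylinder k G l) f x = Sl l (adj M (Sl l) f) x" using H f by (simp add: aeq_def)
  then have e: "P (cylinder k G l) f z = Sl l (adj M (Sl l) f) z" by (rule atom_AE[OF _ z])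
  show ?thesis
  proof (cases "z \<in> R l")
    case True
    let ?w = "tc (dg G l) z"
    have w: "?w \<in> D l" "\<tau> l ?w = z" "atom ?w" using atom_pre[OF l z True] by auto
    have p: "0 < \<Phi> l ?w" using atom_AE[OF sb_Phi_pos[OF l] w(3)] w(1) by simp
    have "Sl l (adj M (Sl l) f) z = complex_of_real (1 / sqrt (\<Phi> l ?w)) * adj M (Sl l) f ?w"
      using True by (simp add: Sop_def)
    also have "\<dots> = complex_of_real (1 / sqrt (\<Phi> l ?w)) * (complex_of_real (sqrt (\<Phi> l ?w)) * f z)"
      using adj_at[OF l c w(3) w(1) f] w(2) by simp
    also have "\<dots> = complex_of_real (1 / sqrt (\<Phi> l ?w) * sqrt (\<Phi> l ?w)) * f z" by (simp add: algebra_simps)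
    also have "\<dots> = f z" using p by simp
    finally show ?thesis using e True by simp
  next
    case False then show ?thesis using e by (simp add: Sop_def)
  qed
qed

end


locale sbP = sby k G M D \<tau> tc \<Phi> y for k G M D \<tau> tc \<Phi> y +
  fixes P
  assumes pvm: "is_pvm M (inf_paths k G) (paths_borel k G) P"
    and H: "\<forall>l\<in>mor G. \<forall>f\<in>L2 M. aeq M (P (cylinder k G l) f)
            (Sop G D \<tau> tc \<Phi> l (adj M (Sop G D \<tau> tc \<Phi> l) f))"
begin

lemma B_empty: "{} \<in> B" unfolding paths_borel_def by (rule sigma_sets.Empty)
lemma B_compl: "A \<in> B \<Longrightarrow> S - A \<in> B" unfolding paths_borel_def by (rule sigma_sets.Compl)
lemma B_UN: "range (A :: nat \<Rightarrow> _) \<subseteq> B \<Longrightarrow> (\<Union>i. A i) \<in> B" unfolding paths_borel_def by (rule sigma_sets.Union) auto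
lemma B_Un: assumes "A \<in> B" "C \<in> B" shows "A \<union> C \<in> B"
proof -
  have "(\<Union>i::nat. if i = 0 then A else C) \<in> B" using assms by (intro B_UN) auto
  moreover have "(\<Union>i::nat. if i = 0 then A else C) = A \<union> C" by (auto split: if_splits)
  ultimately show ?thesis by simp
qed
lemma B_Int: assumes "A \<in> B" "C \<in> B" shows "A \<inter> C \<in> B"
proof -
  have "A \<inter> C = S - ((S - A) \<union> (S - C))" using B_sub[OF assms(1)] by blast
  then show ?thesis using B_compl[OF B_Un[OF B_compl[OF assms(1)] B_compl[OF assms(2)]]] by simp
qed

lemma pv_L2: "E \<in> B \<Longrightarrow> f \<in> L2 M \<Longrightarrow> P E f \<in> L2 M"
  using pvm[unfolded is_pvm_def, THEN conjunct1] by blast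
lemma pv_S: "f \<in> L2 M \<Longrightarrow> aeq M (P S f) f"
  using pvm[unfolded is_pvm_def, THEN conjunct2, THEN conjunct2, THEN conjunct2, THEN conjunct1] by (rule bspec)
lemma pv_int: "E \<in> B \<Longrightarrow> F \<in> B \<Longrightarrow> f \<in> L2 M \<Longrightarrow> aeq M (P (E \<inter> F) f) (P E (P F f))"
proof -
  assume a: "E \<in> B" "F \<in> B" "f \<in> L2 M"
  have "\<forall>E\<in>B. \<forall>F\<in>B. \<forall>f\<in>L2 M. aeq M (P (E \<inter> F) f) (P E (P F f))"
    using pvm[unfolded is_pvm_def, THEN conjunct2, THEN conjunct2, THEN conjunct2, THEN conjunct2, THEN conjunct1] .
  from bspec[OF bspec[OF bspec[OF this a(1)] a(2)] a(3)] show ?thesis .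
qed
lemma pv_add: "range E \<subseteq> B \<Longrightarrow> disjoint_family E \<Longrightarrow> f \<in> L2 M \<Longrightarrow>
   (\<lambda>n. nrm M (\<lambda>x. P (\<Union>i. E i) f x - (\<Sum>i<n. P (E i) f x))) \<longlonglongrightarrow> 0"
proof -
  assume a: "range E \<subseteq> B" "disjoint_family E" "f \<in> L2 M"
  have "\<forall>E::nat \<Rightarrow> _ set. range E \<subseteq> B \<and> disjoint_family E \<longrightarrow>
        (\<forall>f\<in>L2 M. (\<lambda>n. nrm M (\<lambda>x. P (\<Union>i. E i) f x - (\<Sum>i<n. P (E i) f x))) \<longlonglongrightarrow> 0)"
    using pvm[unfolded is_pvm_def, THEN conjunct2, THEN conjunct2, THEN conjunct2, THEN conjunct2, THEN conjunct2] .
  from bspec[OF mp[OF spec[OF this, of E]] a(3)] a(1,2) show ?thesis by blast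
qed

lemma at_atom_bound: assumes h: "h \<in> L2 M" and z: "atom z"
  shows "cmod (h z) \<le> nrm M h / sqrt (measure M {z})"
proof -
  have zs: "{z} \<in> sets M" "emeasure M {z} < \<infinity>" using z atom_fin[OF z] by (auto simp: atom_def)
  have m: "0 < measure M {z}" using atom_measure_pos[OF z] .
  have "(LINT x|M. indicator {z} x *\<^sub>R (cmod (h z))\<^sup>2) \<le> (LINT x|M. (cmod (h x))\<^sup>2)"
  proof (rule integral_mono)
    show "integrable M (\<lambda>x. indicator {z} x *\<^sub>R (cmod (h z))\<^sup>2)"
    proof -
      have "integrable M (indicator {z} :: _ \<Rightarrow> real)" using zs by simp
      then show ?thesis by (rule integrable_scaleR_left)
    qed
    show "integrable M (\<lambda>x. (cmod (h x))\<^sup>2)" using L2_int[OF h] .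
    fix x show "indicator {z} x *\<^sub>R (cmod (h z))\<^sup>2 \<le> (cmod (h x))\<^sup>2"
      by (auto split: split_indicator)
  qed
  moreover have "(LINT x|M. indicator {z} x *\<^sub>R (cmod (h z))\<^sup>2) = measure M {z} * (cmod (h z))\<^sup>2"
    by (subst integral_single[OF zs]) simp
  ultimately have "measure M {z} * (cmod (h z))\<^sup>2 \<le> (LINT x|M. (cmod (h x))\<^sup>2)" by linarith
  then have "sqrt (measure M {z} * (cmod (h z))\<^sup>2) \<le> nrm M h"
    unfolding nrm_def by (rule real_sqrt_le_mono)
  then have "sqrt (measure M {z}) * cmod (h z) \<le> nrm M h" by (simp add: real_sqrt_mult)
  then show ?thesis using m by (simp add: field_simps)
qed

lemma at_atom_lim: assumes a: "\<And>n. a n \<in> L2 M" and lim: "(\<lambda>n. nrm M (a n)) \<longlonglongrightarrow> 0" and z: "atom z"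
  shows "(\<lambda>n. a n z) \<longlonglongrightarrow> 0"
proof (rule Lim_null_comparison)
  show "\<forall>\<^sub>F n in sequentially. norm (a n z) \<le> nrm M (a n) / sqrt (measure M {z})"
    using at_atom_bound[OF a z] by simp
  show "(\<lambda>n. nrm M (a n) / sqrt (measure M {z})) \<longlonglongrightarrow> 0"
    using tendsto_divide_zero[OF lim] by simp
qed

lemma P_add_at: assumes E: "range E \<subseteq> B" "disjoint_family E" and f: "f \<in> L2 M" and z: "atom z"
  shows "(\<lambda>n. \<Sum>i<n. P (E i) f z) \<longlonglongrightarrow> P (\<Union>i. E i) f z"
proof -
  have UB: "(\<Union>i. E i) \<in> B" using E(1) by (rule B_UN)
  let ?a = "\<lambda>n x. P (\<Union>i. E i) f x - (\<Sum>i<n. P (E i) f x)"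
  have aL2: "?a n \<in> L2 M" for n
  proof -
    have "(\<lambda>x. \<Sum>i<n. P (E i) f x) \<in> L2 M"
    proof (rule L2_sum)
      fix i assume "i \<in> {..<n}"
      have "E i \<in> B" using E(1) by auto
      then show "P (E i) f \<in> L2 M" using pv_L2 f by blast
    qed simp
    then show ?thesis using pv_L2[OF UB f] by (rule L2_diff[rotated])
  qed
  have "(\<lambda>n. ?a n z) \<longlonglongrightarrow> 0" using at_atom_lim[OF aL2 pv_add[OF E f] z] .
  then have "(\<lambda>n. P (\<Union>i. E i) f z - ?a n z) \<longlonglongrightarrow> P (\<Union>i. E i) f z - 0"
    by (intro tendsto_diff tendsto_const)
  then show ?thesis by simp
qed

lemma ae_at: "aeq M a b \<Longrightarrow> atom z \<Longrightarrow> a z = b z"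
  unfolding aeq_def by (rule atom_AE)

definition Qp :: "_ set \<Rightarrow> bool" where
  "Qp E \<longleftrightarrow> E \<in> B \<and> (\<forall>f\<in>L2 M. \<forall>z\<in>Orb. P E f z = (if ph z \<in> E then f z else 0))"

lemma P_empty_at: assumes f: "f \<in> L2 M" and z: "atom z" shows "P {} f z = 0"
proof -
  let ?E = "\<lambda>i::nat. {} :: (deg \<Rightarrow> deg \<Rightarrow> 'a) set"
  have E: "range ?E \<subseteq> B" "disjoint_family ?E"
    using B_empty by (auto simp: disjoint_family_on_def)
  have "(\<lambda>n. \<Sum>i<n. P (?E i) f z) \<longlonglongrightarrow> P (\<Union>i. ?E i) f z" by (rule P_add_at[OF E f z])
  then have L: "(\<lambda>n. of_nat n * P {} f z) \<longlonglongrightarrow> P {} f z" by simp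
  then have "(\<lambda>n. of_nat (Suc n) * P {} f z) \<longlonglongrightarrow> P {} f z" by (rule LIMSEQ_Suc)
  from tendsto_diff[OF this L] show ?thesis by (simp add: algebra_simps LIMSEQ_const_iff)
qed

lemma Q_empty: "Qp {}"
  unfolding Qp_def using P_empty_at Orb_atom B_empty by simp

lemma Q_compl: assumes A: "Qp A" shows "Qp (S - A)"
proof -
  have AB: "A \<in> B" using A by (simp add: Qp_def)
  have SAB: "S - A \<in> B" using B_compl[OF AB] .
  have AS: "A \<subseteq> S" using B_sub[OF AB] .
  let ?E = "\<lambda>i::nat. if i = 0 then A else if i = 1 then S - A else {}"
  have E: "range ?E \<subseteq> B" "disjoint_family ?E"
    using AB SAB B_empty by (auto simp: disjoint_family_on_def)
  have U: "(\<Union>i. ?E i) = S"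
  proof
    show "(\<Union>i. ?E i) \<subseteq> S" using AS by auto
    show "S \<subseteq> (\<Union>i. ?E i)"
    proof
      fix x assume "x \<in> S"
      then have "x \<in> ?E 0 \<or> x \<in> ?E 1" by auto
      then show "x \<in> (\<Union>i. ?E i)" by blast
    qed
  qed
  have main: "P (S - A) f z = (if ph z \<in> S - A then f z else 0)" if f: "f \<in> L2 M" and z: "z \<in> Orb" for f z
  proof -
    have za: "atom z" using Orb_atom[OF z] .
    have L: "(\<lambda>n. \<Sum>i<n. P (?E i) f z) \<longlonglongrightarrow> P S f z" using P_add_at[OF E f za] U by simp
    have c: "(\<Sum>i<n + 2. P (?E i) f z) = P A f z + P (S - A) f z" for n
    proof (induction n)
      case 0 show ?case by (simp add: numeral_2_eq_2)
    next
      case (Suc n)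
      have "(\<Sum>i<Suc n + 2. P (?E i) f z) = (\<Sum>i<n + 2. P (?E i) f z) + P (?E (n + 2)) f z" by simp
      also have "P (?E (n + 2)) f z = 0" using P_empty_at[OF f za] by simp
      finally show ?case using Suc.IH by simp
    qed
    have "(\<lambda>n. \<Sum>i<n + 2. P (?E i) f z) \<longlonglongrightarrow> P S f z" using LIMSEQ_ignore_initial_segment[OF L] .
    then have "P S f z = P A f z + P (S - A) f z" unfolding c by (simp add: LIMSEQ_const_iff)
    moreover have "P S f z = f z" using ae_at[OF pv_S[OF f] za] .
    moreover have "P A f z = (if ph z \<in> A then f z else 0)" using A f z by (simp add: Qp_def)
    moreover have "ph z \<in> S" using phi_S[OF za] .
    ultimately show ?thesis by auto
  qed
  show ?thesis unfolding Qp_def using SAB main by blast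
qed

lemma Q_int: assumes A: "Qp A" and C: "Qp C" shows "Qp (A \<inter> C)"
proof -
  have AB: "A \<in> B" and CB: "C \<in> B" using A C by (auto simp: Qp_def)
  have "A \<inter> C \<in> B" using B_Int[OF AB CB] .
  moreover have "P (A \<inter> C) f z = (if ph z \<in> A \<inter> C then f z else 0)" if f: "f \<in> L2 M" and z: "z \<in> Orb" for f z
  proof -
    have za: "atom z" using Orb_atom[OF z] .
    have "P (A \<inter> C) f z = P A (P C f) z" using ae_at[OF pv_int[OF AB CB f] za] .
    also have "\<dots> = (if ph z \<in> A then P C f z else 0)" using A pv_L2[OF CB f] z by (simp add: Qp_def)
    also have "\<dots> = (if ph z \<in> A \<inter> C then f z else 0)" using C f z by (simp add: Qp_def)
    finally show ?thesis .
  qed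
  ultimately show ?thesis unfolding Qp_def by blast
qed

lemma Q_sub: "Qp A \<Longrightarrow> A \<subseteq> S" by (simp add: Qp_def B_sub)

lemma Q_un: assumes A: "Qp A" and C: "Qp C" shows "Qp (A \<union> C)"
proof -
  have "A \<union> C = S - ((S - A) \<inter> (S - C))" using Q_sub[OF A] Q_sub[OF C] by blast
  then show ?thesis using Q_compl[OF Q_int[OF Q_compl[OF A] Q_compl[OF C]]] by simp
qed

lemma Q_diff: assumes A: "Qp A" and C: "Qp C" shows "Qp (A - C)"
proof -
  have "A - C = A \<inter> (S - C)" using Q_sub[OF A] by blast
  then show ?thesis using Q_int[OF A Q_compl[OF C]] by simp
qed

lemma Q_disj_union: fixes E :: "nat \<Rightarrow> _" assumes E: "\<And>i. Qp (E i)" and d: "disjoint_family E" shows "Qp (\<Union>i. E i)"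
proof -
  have EB: "range E \<subseteq> B" using E by (auto simp: Qp_def)
  have UB: "(\<Union>i. E i) \<in> B" using EB by (rule B_UN)
  have main: "P (\<Union>i. E i) f z = (if ph z \<in> (\<Union>i. E i) then f z else 0)" if f: "f \<in> L2 M" and z: "z \<in> Orb" for f z
  proof -
    have za: "atom z" using Orb_atom[OF z] .
    have L: "(\<lambda>n. \<Sum>i<n. P (E i) f z) \<longlonglongrightarrow> P (\<Union>i. E i) f z" by (rule P_add_at[OF EB d f za])
    have e: "P (E i) f z = (if ph z \<in> E i then f z else 0)" for i using E[of i] f z by (simp add: Qp_def)
    show ?thesis
    proof (cases "\<exists>j. ph z \<in> E j")
      case True
      then obtain j where j: "ph z \<in> E j" by blast
      have uq: "ph z \<notin> E i" if "i \<noteq> j" for i using d j that by (auto simp: disjoint_family_on_def)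
      have s: "(\<Sum>i<n + Suc j. P (E i) f z) = f z" for n
      proof -
        have "(\<Sum>i<n + Suc j. P (E i) f z) = (\<Sum>i<n + Suc j. if i = j then f z else 0)"
          using e uq j by (intro sum.cong refl) auto
        also have "\<dots> = f z" by simp
        finally show ?thesis .
      qed
      have "(\<lambda>n. \<Sum>i<n + Suc j. P (E i) f z) \<longlonglongrightarrow> P (\<Union>i. E i) f z" using LIMSEQ_ignore_initial_segment[OF L] .
      then have "P (\<Union>i. E i) f z = f z" unfolding s by (simp add: LIMSEQ_const_iff)
      then show ?thesis using j by auto
    next
      case False
      then have "(\<Sum>i<n. P (E i) f z) = 0" for n using e by simp
      then have "P (\<Union>i. E i) f z = 0" using L by (simp add: LIMSEQ_const_iff)
      then show ?thesis using False by auto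
    qed
  qed
  show ?thesis unfolding Qp_def using UB main by blast
qed

lemma Q_fin_un: fixes A :: "nat \<Rightarrow> _" and n :: nat assumes A: "\<And>i. Qp (A i)" shows "Qp (\<Union>i\<in>{0..<n}. A i)"
proof (induction n)
  case 0 then show ?case using Q_empty by simp
next
  case (Suc n)
  have "(\<Union>i\<in>{0..<Suc n}. A i) = A n \<union> (\<Union>i\<in>{0..<n}. A i)" by (auto simp: less_Suc_eq)
  then show ?case using Q_un[OF A Suc.IH] by simp
qed

lemma Q_union: fixes A :: "nat \<Rightarrow> _" assumes A: "\<And>i. Qp (A i)" shows "Qp (\<Union>i. A i)"
proof -
  have "Qp (disjointed A i)" for i unfolding disjointed_def by (rule Q_diff[OF A Q_fin_un[OF A]])
  then have "Qp (\<Union>i. disjointed A i)" by (rule Q_disj_union[OF _ disjoint_family_disjointed])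
  then show ?thesis by (simp add: UN_disjointed_eq)
qed

lemma Q_cyl: assumes l: "l \<in> mor G" shows "Qp (cylinder k G l)"
proof -
  have c: "y \<in> space M" using y by (simp add: atom_def)
  have "P (cylinder k G l) f z = (if ph z \<in> cylinder k G l then f z else 0)" if f: "f \<in> L2 M" and z: "z \<in> Orb" for f z
  proof -
    have za: "atom z" using Orb_atom[OF z] .
    have "\<forall>f\<in>L2 M. aeq M (P (cylinder k G l) f) (Sl l (adj M (Sl l) f))" using H l by blast
    then show ?thesis using P_cyl_at[OF _ l c f za] phi_cyl[OF za l] by simp
  qed
  then show ?thesis unfolding Qp_def using cyl_B[OF l] by blast
qed

lemma Q_all: assumes E: "E \<in> B" shows "Qp E"
  using E unfolding paths_borel_def
proof (induction rule: sigma_sets.induct)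
  case (Basic a) then show ?case using Q_cyl by blast
next
  case Empty then show ?case by (rule Q_empty)
next
  case (Compl a) then show ?case using Q_compl by blast
next
  case (Union a) then show ?case using Q_union by blast
qed

lemma P_at: "E \<in> B \<Longrightarrow> f \<in> L2 M \<Longrightarrow> z \<in> Orb \<Longrightarrow> P E f z = (if ph z \<in> E then f z else 0)"
  using Q_all by (simp add: Qp_def)

end


locale sbyI = sby k G M D \<tau> tc \<Phi> y for k G M D \<tau> tc \<Phi> y +
  assumes irr: "irreducible_ops M (Sop G D \<tau> tc \<Phi> ` mor G)"
begin

definition V where "V = {f \<in> L2 M. AE x in M. x \<notin> Orb \<longrightarrow> f x = 0}"

lemma ind_L2: "atom z \<Longrightarrow> (\<lambda>x. complex_of_real (indicator {z} x)) \<in> L2 M"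
  using atom_fin[of z] by (intro L2_ind) (auto simp: atom_def)

lemma ind_V: assumes z: "z \<in> Orb" shows "(\<lambda>x. complex_of_real (indicator {z} x)) \<in> V"
  unfolding V_def using ind_L2[OF Orb_atom[OF z]] z by (auto split: split_indicator)

lemma V_lim: assumes F: "\<And>n. F n \<in> V" and f: "f \<in> L2 M" and lim: "(\<lambda>n. nrm M (\<lambda>x. F n x - f x)) \<longlonglongrightarrow> 0"
  shows "f \<in> V"
proof -
  let ?N = "space M - Orb"
  have N: "?N \<in> sets M" using Orb_sets by auto
  have fm[measurable]: "f \<in> borel_measurable M" using L2_meas[OF f] .
  have i1: "integrable M (\<lambda>x. indicator ?N x *\<^sub>R (cmod (f x))\<^sup>2)"
    using integrable_mult_indicator[OF N L2_int[OF f]] .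
  have le: "(LINT x|M. indicator ?N x *\<^sub>R (cmod (f x))\<^sup>2) \<le> (nrm M (\<lambda>x. F n x - f x))\<^sup>2" for n
  proof -
    have Fn: "F n \<in> L2 M" "AE x in M. x \<notin> Orb \<longrightarrow> F n x = 0" using F[of n] by (auto simp: V_def)
    have d: "(\<lambda>x. F n x - f x) \<in> L2 M" using L2_diff[OF Fn(1) f] .
    have "(LINT x|M. indicator ?N x *\<^sub>R (cmod (f x))\<^sup>2) \<le> (LINT x|M. (cmod (F n x - f x))\<^sup>2)"
    proof (rule integral_mono_AE[OF i1 L2_int[OF d]])
      show "AE x in M. indicator ?N x *\<^sub>R (cmod (f x))\<^sup>2 \<le> (cmod (F n x - f x))\<^sup>2"
        using Fn(2)
      proof (rule AE_mp, intro AE_I2 impI)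
        fix x assume x: "x \<in> space M" and h: "x \<notin> Orb \<longrightarrow> F n x = 0"
        show "indicator ?N x *\<^sub>R (cmod (f x))\<^sup>2 \<le> (cmod (F n x - f x))\<^sup>2"
        proof (cases "x \<in> Orb")
          case True then show ?thesis by simp
        next
          case False then show ?thesis using h x by (simp add: norm_minus_commute)
        qed
      qed
    qed
    also have "\<dots> = (nrm M (\<lambda>x. F n x - f x))\<^sup>2"
      unfolding nrm_def by (simp add: integral_nonneg_AE)
    finally show ?thesis .
  qed
  have lim2: "(\<lambda>n. (nrm M (\<lambda>x. F n x - f x))\<^sup>2) \<longlonglongrightarrow> 0" using tendsto_power[OF lim, of 2] by simp
  have "(LINT x|M. indicator ?N x *\<^sub>R (cmod (f x))\<^sup>2) \<le> 0"
    by (rule tendsto_le[OF trivial_limit_sequentially lim2 tendsto_const]) (use le in simp)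
  moreover have "0 \<le> (LINT x|M. indicator ?N x *\<^sub>R (cmod (f x))\<^sup>2)" by (rule Bochner_Integration.integral_nonneg) auto
  ultimately have "(LINT x|M. indicator ?N x *\<^sub>R (cmod (f x))\<^sup>2) = 0" by (rule antisym)
  then have "AE x in M. indicator ?N x *\<^sub>R (cmod (f x))\<^sup>2 = 0"
    using integral_nonneg_eq_0_iff_AE[OF i1] by simp
  then have "AE x in M. x \<notin> Orb \<longrightarrow> f x = 0"
    by (rule AE_mp) (auto intro!: AE_I2 split: split_indicator)
  then show ?thesis using f by (simp add: V_def)
qed

lemma V_closed: "closed_subspace M V"
  unfolding closed_subspace_def
proof (intro conjI ballI allI impI)
  show "V \<subseteq> L2 M" by (auto simp: V_def)
  show "(\<lambda>_. 0) \<in> V" by (simp add: V_def L2_zero)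
next
  fix f g assume f: "f \<in> V" and g: "g \<in> V"
  have fa: "AE x in M. x \<notin> Orb \<longrightarrow> f x = 0" and ga: "AE x in M. x \<notin> Orb \<longrightarrow> g x = 0"
    using f g by (auto simp: V_def)
  have "AE x in M. x \<notin> Orb \<longrightarrow> f x + g x = 0" using fa ga by eventually_elim auto
  moreover have "(\<lambda>x. f x + g x) \<in> L2 M" using f g L2_add[of f M g] by (auto simp: V_def)
  ultimately show "(\<lambda>x. f x + g x) \<in> V" by (simp add: V_def)
next
  fix c f assume f: "f \<in> V"
  have fa: "AE x in M. x \<notin> Orb \<longrightarrow> f x = 0" using f by (auto simp: V_def)
  have "AE x in M. x \<notin> Orb \<longrightarrow> c * f x = 0" using fa by eventually_elim auto
  moreover have "(\<lambda>x. c * f x) \<in> L2 M" using f L2_scale[of f M c] by (auto simp: V_def)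
  ultimately show "(\<lambda>x. c * f x) \<in> V" by (simp add: V_def)
next
  fix f g assume f: "f \<in> V" and g: "g \<in> L2 M" and e: "aeq M f g"
  have fa: "AE x in M. x \<notin> Orb \<longrightarrow> f x = 0" using f by (auto simp: V_def)
  have ea: "AE x in M. f x = g x" using e by (simp add: aeq_def)
  have "AE x in M. x \<notin> Orb \<longrightarrow> g x = 0" using fa ea by eventually_elim auto
  then show "g \<in> V" using g by (simp add: V_def)
next
  fix F f assume "(\<forall>n. F n \<in> V) \<and> f \<in> L2 M \<and> (\<lambda>n. nrm M (\<lambda>x. F n x - f x)) \<longlonglongrightarrow> 0"
  then show "f \<in> V" using V_lim by blast
qed

lemma c_space: "y \<in> space M" using y by (simp add: atom_def)

lemma V_inv: assumes l: "l \<in> mor G" and f: "f \<in> V" shows "Sl l f \<in> V"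
proof -
  have fL: "f \<in> L2 M" and fa: "AE x in M. x \<notin> Orb \<longrightarrow> f x = 0" using f by (auto simp: V_def)
  have fm[measurable]: "f \<in> borel_measurable M" using L2_meas[OF fL] .
  let ?N = "{w \<in> space M. w \<notin> Orb \<and> f w \<noteq> 0}"
  have Ns: "?N \<in> sets M" using Orb_sets by measurable
  have N0: "emeasure M ?N = 0" using fa Ns by (subst AE_iff_measurable[symmetric]) auto
  let ?I = "?N \<inter> D l"
  have Is: "?I \<in> sets M" using Ns sb_D[OF l] by auto
  have "emeasure M (\<tau> l ` ?I) = (\<integral>\<^sup>+ x\<in>?I. ennreal (\<Phi> l x) \<partial>M)" using sb_img_meas[OF l Is] by simp
  also have "\<dots> = 0"
  proof (rule nn_integral_null_set)
    show "?I \<in> null_sets M" using Is N0 emeasure_mono[of ?I ?N M] Ns by (auto simp: null_sets_def)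
  qed
  finally have T0: "emeasure M (\<tau> l ` ?I) = 0" .
  have Ts: "\<tau> l ` ?I \<in> sets M" using sb_img[OF l Is] by simp
  have "AE x in M. x \<notin> \<tau> l ` ?I" using T0 Ts sets.sets_into_space[OF Ts] by (subst AE_iff_measurable[of "\<tau> l ` ?I"]) auto
  then have "AE x in M. x \<notin> Orb \<longrightarrow> Sl l f x = 0"
  proof (rule AE_mp, intro AE_I2 impI)
    fix x assume x: "x \<in> space M" and nt: "x \<notin> \<tau> l ` ?I" and nO: "x \<notin> Orb"
    show "Sl l f x = 0"
    proof (cases "x \<in> R l")
      case True
      let ?w = "tc (dg G l) x"
      have w: "?w \<in> D l" "\<tau> l ?w = x" using R_iff[OF l] True by auto
      have "?w \<notin> Orb" using Orb_tau[of ?w l] w l nO by auto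
      moreover have "?w \<in> space M" using w(1) D_space[OF l] by auto
      ultimately have "f ?w = 0" using nt w by (metis (mono_tags, lifting) IntI image_eqI mem_Collect_eq)
      then show ?thesis by (simp add: Sop_def)
    next
      case False then show ?thesis by (simp add: Sop_def)
    qed
  qed
  then show ?thesis using Sop_L2[OF l c_space fL] by (simp add: V_def)
qed

lemma orth_zero: assumes g: "g \<in> orthc M V" and z: "z \<in> Orb" shows "g z = 0"
proof -
  have za: "atom z" using Orb_atom[OF z] .
  have zs: "{z} \<in> sets M" "emeasure M {z} < \<infinity>" using za atom_fin[OF za] by (auto simp: atom_def)
  have "ip M (\<lambda>x. complex_of_real (indicator {z} x)) g = 0" using g ind_V[OF z] by (simp add: orthc_def)
  moreover have "ip M (\<lambda>x. 1 * complex_of_real (indicator {z} x)) g = measure M {z} *\<^sub>R (1 * cnj (g z))"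
    by (rule ip_single[OF zs])
  ultimately have "measure M {z} *\<^sub>R cnj (g z) = 0" by simp
  then show ?thesis using atom_measure_pos[OF za] by simp
qed

lemma orth_inv: assumes l: "l \<in> mor G" and g: "g \<in> orthc M V" shows "Sl l g \<in> orthc M V"
proof -
  have gL: "g \<in> L2 M" using g by (simp add: orthc_def)
  have "ip M f (Sl l g) = 0" if f: "f \<in> V" for f
  proof -
    have fa: "AE x in M. x \<notin> Orb \<longrightarrow> f x = 0" using f by (simp add: V_def)
    have "AE x in M. f x * cnj (Sl l g x) = 0"
    proof (rule AE_mp[OF fa], intro AE_I2 impI)
      fix x assume h: "x \<notin> Orb \<longrightarrow> f x = 0"
      show "f x * cnj (Sl l g x) = 0"
      proof (cases "x \<in> Orb")
        case True
        show ?thesis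
        proof (cases "x \<in> R l")
          case True2: True
          have "g (tc (dg G l) x) = 0" using orth_zero[OF g Orb_tc[OF True l True2]] .
          then show ?thesis by (simp add: Sop_def)
        next
          case False then show ?thesis by (simp add: Sop_def)
        qed
      next
        case False then show ?thesis using h by simp
      qed
    qed
    then show ?thesis unfolding ip_def by (rule integral_eq_zero_AE)
  qed
  then show ?thesis using Sop_L2[OF l c_space gL] by (simp add: orthc_def)
qed

lemma L2_V: "L2 M \<subseteq> V"
proof -
  have "(\<forall>f\<in>V. aeq M f (\<lambda>_. 0)) \<or> L2 M \<subseteq> V"
    using irr V_closed V_inv orth_inv unfolding irreducible_ops_def by blast
  moreover have "\<not> aeq M (\<lambda>x. complex_of_real (indicator {y} x)) (\<lambda>_. 0)"
  proof
    assume "aeq M (\<lambda>x. complex_of_real (indicator {y} x)) (\<lambda>_. 0)"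
    then have "complex_of_real (indicator {y} y) = 0" unfolding aeq_def by (rule atom_AE[OF _ y])
    then show False by simp
  qed
  ultimately show ?thesis using ind_V[OF y_Orb] by blast
qed

lemma Orb_full: "AE x in M. x \<in> Orb"
proof -
  let ?L0 = "{l \<in> mor G. dg G l = dzero}"
  have cL0: "countable ?L0" using countable_subset[OF _ countable_mor] by auto
  let ?U = "\<Union>l\<in>?L0. R l"
  have Us: "?U \<in> sets M" by (rule sets.countable_UN''[OF cL0]) (auto simp: R_sets)
  have "AE x in M. x \<in> ?U"
    using sb_cover[OF NK_zero] Us by (subst AE_iff_measurable[of "space M - ?U"]) auto
  moreover have "AE x in M. \<forall>l\<in>?L0. x \<in> R l \<longrightarrow> x \<in> Orb"
  proof (rule AE_ball_countable'[OF _ cL0])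
    fix l assume l: "l \<in> ?L0"
    then have lm: "l \<in> mor G" by simp
    have s: "R l - Orb \<in> sets M" using R_sets[OF lm] Orb_sets by auto
    have "emeasure M (R l - Orb) < \<infinity>"
      using emeasure_mono[of "R l - Orb" "R l" M] R_sets[OF lm] sb_Rfin[OF lm] by (auto simp: le_less_trans)
    then have "(\<lambda>x. complex_of_real (indicator (R l - Orb) x)) \<in> V" using L2_V L2_ind[OF s] by blast
    then have "AE x in M. x \<notin> Orb \<longrightarrow> complex_of_real (indicator (R l - Orb) x) = 0" by (simp add: V_def)
    then show "AE x in M. x \<in> R l \<longrightarrow> x \<in> Orb"
      by (rule AE_mp) (auto intro!: AE_I2 split: split_indicator)
  qed
  ultimately show ?thesis by (rule AE_mp[OF _ AE_mp]) (auto intro!: AE_I2)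
qed

end


locale fin = sbP k G M D \<tau> tc \<Phi> y P + sbyI k G M D \<tau> tc \<Phi> y for k G M D \<tau> tc \<Phi> y P
begin

lemma zero_off: assumes E: "E \<in> B" and dis: "\<And>z. z \<in> Orb \<Longrightarrow> ph z \<notin> E" shows "zero_op M (P E)"
  unfolding zero_op_def aeq_def
proof
  fix f assume f: "f \<in> L2 M"
  show "AE x in M. P E f x = 0"
    using Orb_full by (rule AE_mp) (use P_at[OF E f] dis in \<open>auto intro!: AE_I2\<close>)
qed

lemma final_orbit: "zero_op M (P (S - orbit k G (ph y)))"
  by (rule zero_off[OF B_compl[OF orbit_B]]) (use Orb_orbit in auto)

definition J where "J H = {x \<in> Orb. ph x \<notin> H}"

lemma J_sets: "J H \<in> sets M"
  by (rule sets.countable[OF _ countable_subset[OF _ Orb_count]]) (use Orb_atom in \<open>auto simp: J_def atom_def\<close>)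

lemma nrm_H: assumes f: "f \<in> L2 M" and H: "finite H" "H \<subseteq> ph ` Orb"
  shows "nrm M (\<lambda>x. f x - (\<Sum>\<omega>\<in>H. P {\<omega>} f x)) = sqrt (LINT x|M. indicator (J H) x *\<^sub>R (cmod (f x))\<^sup>2)"
proof -
  have fm[measurable]: "f \<in> borel_measurable M" using L2_meas[OF f] .
  have HB: "\<omega> \<in> H \<Longrightarrow> {\<omega>} \<in> B" for \<omega> using H(2) phi_S Orb_atom singleton_B by blast
  have sL: "(\<lambda>x. \<Sum>\<omega>\<in>H. P {\<omega>} f x) \<in> L2 M"
    by (rule L2_sum[OF H(1)]) (use pv_L2 HB f in blast)
  have sm: "(\<lambda>x. \<Sum>\<omega>\<in>H. P {\<omega>} f x) \<in> borel_measurable M" using L2_meas[OF sL] .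
  have [measurable]: "J H \<in> sets M" using J_sets .
  have "AE x in M. (cmod (f x - (\<Sum>\<omega>\<in>H. P {\<omega>} f x)))\<^sup>2 = indicator (J H) x *\<^sub>R (cmod (f x))\<^sup>2"
    using Orb_full
  proof (rule AE_mp, intro AE_I2 impI)
    fix x assume x: "x \<in> Orb"
    have "(\<Sum>\<omega>\<in>H. P {\<omega>} f x) = (\<Sum>\<omega>\<in>H. if ph x = \<omega> then f x else 0)"
      using P_at[OF HB f x] by (intro sum.cong refl) auto
    also have "\<dots> = (if ph x \<in> H then f x else 0)" using H(1) by simp
    finally show "(cmod (f x - (\<Sum>\<omega>\<in>H. P {\<omega>} f x)))\<^sup>2 = indicator (J H) x *\<^sub>R (cmod (f x))\<^sup>2"
      using x by (auto simp: J_def split: split_indicator)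
  qed
  then have "(LINT x|M. (cmod (f x - (\<Sum>\<omega>\<in>H. P {\<omega>} f x)))\<^sup>2) = (LINT x|M. indicator (J H) x *\<^sub>R (cmod (f x))\<^sup>2)"
    using sm by (intro integral_cong_AE) auto
  then show ?thesis unfolding nrm_def by simp
qed

lemma final_atomic: "purely_atomic M S B P"
  unfolding purely_atomic_def
proof (rule exI[of _ "ph ` Orb"], intro conjI ballI allI impI)
  show Om: "ph ` Orb \<subseteq> S" using phi_S Orb_atom by blast
  show OmB: "ph ` Orb \<in> B" by (rule countable_B[OF Om countable_image[OF Orb_count]])
  show "zero_op M (P (S - ph ` Orb))" by (rule zero_off[OF B_compl[OF OmB]]) auto
next
  fix \<omega> assume "\<omega> \<in> ph ` Orb"
  then obtain z0 where z0: "z0 \<in> Orb" "\<omega> = ph z0" by blast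
  have za: "atom z0" using Orb_atom[OF z0(1)] .
  show "{\<omega>} \<in> B" using singleton_B phi_S[OF za] z0(2) by simp
  then have wB: "{\<omega>} \<in> B" .
  show "\<not> zero_op M (P {\<omega>})"
  proof
    assume zo: "zero_op M (P {\<omega>})"
    let ?f = "\<lambda>x. complex_of_real (indicator {z0} x)"
    have fL: "?f \<in> L2 M" using ind_L2[OF za] .
    have "AE x in M. P {\<omega>} ?f x = 0" using zo fL unfolding zero_op_def aeq_def by blast
    then have "P {\<omega>} ?f z0 = 0" by (rule atom_AE[OF _ za])
    moreover have "P {\<omega>} ?f z0 = ?f z0" using P_at[OF wB fL z0(1)] z0(2) by simp
    ultimately show False by simp
  qed
next
  fix f and \<epsilon> :: real assume f: "f \<in> L2 M" and e: "0 < \<epsilon>"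
  have fm[measurable]: "f \<in> borel_measurable M" using L2_meas[OF f] .
  let ?e = "from_nat_into Orb"
  have Orng: "range ?e = Orb" using y_Orb Orb_count by (intro range_from_nat_into) auto
  let ?K = "\<lambda>n. Orb - ?e ` {..<n}"
  have Ks: "?K n \<in> sets M" for n
    by (rule sets.countable[OF _ countable_subset[OF _ Orb_count]]) (use Orb_atom in \<open>auto simp: atom_def\<close>)
  have "(\<lambda>n. LINT x|M. indicator (?K n) x *\<^sub>R (cmod (f x))\<^sup>2) \<longlonglongrightarrow> (LINT x|M. (0::real))"
  proof (rule integral_dominated_convergence[where w = "\<lambda>x. (cmod (f x))\<^sup>2"])
    show "(\<lambda>x. 0::real) \<in> borel_measurable M" by simp
    show "(\<lambda>x. indicator (?K n) x *\<^sub>R (cmod (f x))\<^sup>2) \<in> borel_measurable M" for n using Ks[of n] by measurable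
    show "integrable M (\<lambda>x. (cmod (f x))\<^sup>2)" using L2_int[OF f] .
    show "AE x in M. (\<lambda>n. indicator (?K n) x *\<^sub>R (cmod (f x))\<^sup>2) \<longlonglongrightarrow> 0"
    proof (rule AE_I2)
      fix x
      show "(\<lambda>n. indicator (?K n) x *\<^sub>R (cmod (f x))\<^sup>2) \<longlonglongrightarrow> 0"
      proof (cases "x \<in> Orb")
        case True
        then obtain j where j: "x = ?e j" using Orng by (metis rangeE)
        have z: "(\<lambda>n. indicator (?K (n + Suc j)) x *\<^sub>R (cmod (f x))\<^sup>2) = (\<lambda>n. 0)"
          using j by (auto simp: fun_eq_iff split: split_indicator)
        have "(\<lambda>n. indicator (?K (n + Suc j)) x *\<^sub>R (cmod (f x))\<^sup>2) \<longlonglongrightarrow> 0"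
          unfolding z by (rule tendsto_const)
        then show ?thesis by (rule LIMSEQ_offset)
      next
        case False then show ?thesis by (simp split: split_indicator)
      qed
    qed
    show "AE x in M. norm (indicator (?K n) x *\<^sub>R (cmod (f x))\<^sup>2) \<le> (cmod (f x))\<^sup>2" for n
      by (rule AE_I2) (auto split: split_indicator)
  qed
  then have lim: "(\<lambda>n. LINT x|M. indicator (?K n) x *\<^sub>R (cmod (f x))\<^sup>2) \<longlonglongrightarrow> 0" by simp
  have "\<epsilon>\<^sup>2 > 0" using e by simp
  from order_tendstoD(2)[OF lim this]
  obtain N0 where "\<forall>n\<ge>N0. (LINT x|M. indicator (?K n) x *\<^sub>R (cmod (f x))\<^sup>2) < \<epsilon>\<^sup>2"
    unfolding eventually_sequentially by blast
  then have N: "(LINT x|M. indicator (?K N0) x *\<^sub>R (cmod (f x))\<^sup>2) < \<epsilon>\<^sup>2" by simp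
  define N where "N = N0"
  have N: "(LINT x|M. indicator (?K N) x *\<^sub>R (cmod (f x))\<^sup>2) < \<epsilon>\<^sup>2" using N unfolding N_def .
  let ?F = "ph ` ?e ` {..<N}"
  show "\<exists>F. finite F \<and> F \<subseteq> ph ` Orb \<and>
           (\<forall>H. finite H \<and> F \<subseteq> H \<and> H \<subseteq> ph ` Orb \<longrightarrow> nrm M (\<lambda>x. f x - (\<Sum>\<omega>\<in>H. P {\<omega>} f x)) < \<epsilon>)"
  proof (intro exI[of _ ?F] conjI allI impI)
    show "finite ?F" by simp
    show "?F \<subseteq> ph ` Orb" using Orng by auto
    fix H assume H: "finite H \<and> ?F \<subseteq> H \<and> H \<subseteq> ph ` Orb"
    have JK: "J H \<subseteq> ?K N" using H unfolding J_def by auto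
    have "(LINT x|M. indicator (J H) x *\<^sub>R (cmod (f x))\<^sup>2) \<le> (LINT x|M. indicator (?K N) x *\<^sub>R (cmod (f x))\<^sup>2)"
    proof (rule integral_mono)
      show "integrable M (\<lambda>x. indicator (J H) x *\<^sub>R (cmod (f x))\<^sup>2)"
        using integrable_mult_indicator[OF J_sets L2_int[OF f]] .
      show "integrable M (\<lambda>x. indicator (?K N) x *\<^sub>R (cmod (f x))\<^sup>2)"
        using integrable_mult_indicator[OF Ks L2_int[OF f]] .
      fix x show "indicator (J H) x *\<^sub>R (cmod (f x))\<^sup>2 \<le> indicator (?K N) x *\<^sub>R (cmod (f x))\<^sup>2"
        using JK by (auto split: split_indicator)
    qed
    then have lt: "(LINT x|M. indicator (J H) x *\<^sub>R (cmod (f x))\<^sup>2) < \<epsilon>\<^sup>2" using N by simp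
    have "nrm M (\<lambda>x. f x - (\<Sum>\<omega>\<in>H. P {\<omega>} f x)) = sqrt (LINT x|M. indicator (J H) x *\<^sub>R (cmod (f x))\<^sup>2)"
      using nrm_H[OF f] H by blast
    also have "\<dots> < sqrt (\<epsilon>\<^sup>2)" using lt by (rule real_sqrt_less_mono)
    also have "\<dots> = \<epsilon>" using e by simp
    finally show "nrm M (\<lambda>x. f x - (\<Sum>\<omega>\<in>H. P {\<omega>} f x)) < \<epsilon>" .
  qed
qed

end

theorem theorem5p2:
  fixes k :: nat and G :: "'a kgraph" and M :: "'x measure"
    and D :: "'a \<Rightarrow> 'x set" and \<tau> :: "'a \<Rightarrow> 'x \<Rightarrow> 'x"
    and tc :: "deg \<Rightarrow> 'x \<Rightarrow> 'x" and \<Phi> :: "'a \<Rightarrow> 'x \<Rightarrow> real" and y :: 'x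
  assumes "1 \<le> k"
    and "k_graph k G"
    and "row_finite_source_free k G"
    and "lambda_sbfs k G M D \<tau> tc \<Phi>"
    and "irreducible_ops M (Sop G D \<tau> tc \<Phi> ` mor G)"
    and "y \<in> space M" and "{y} \<in> sets M" and "0 < emeasure M {y}"
    and "is_pvm M (inf_paths k G) (paths_borel k G) P"
    and "\<forall>l\<in>mor G. \<forall>f\<in>L2 M. aeq M (P (cylinder k G l) f)
            (Sop G D \<tau> tc \<Phi> l (adj M (Sop G D \<tau> tc \<Phi> l) f))"
  shows "purely_atomic M (inf_paths k G) (paths_borel k G) P \<and>
         zero_op M (P (inf_paths k G - orbit k G (phi k G D \<tau> y)))"
proof -
  have SB: "sb k G M D \<tau> tc \<Phi>" using assms(2,4) by (intro sb.intro kg.intro sb_axioms.intro)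
  have AT: "sb.atom M y" using assms(6,7,8) by (simp add: sb.atom_def[OF SB])
  interpret fin k G M D \<tau> tc \<Phi> y P
  proof (unfold_locales)
    show "k_graph k G" by fact
    show "lambda_sbfs k G M D \<tau> tc \<Phi>" by fact
    show "sb.atom M y" by (rule AT)
    show "is_pvm M (inf_paths k G) (paths_borel k G) P" by fact
    show "\<forall>l\<in>mor G. \<forall>f\<in>L2 M. aeq M (P (cylinder k G l) f)
            (Sop G D \<tau> tc \<Phi> l (adj M (Sop G D \<tau> tc \<Phi> l) f))" by fact
    show "irreducible_ops M (Sop G D \<tau> tc \<Phi> ` mor G)" by fact
  qed
  show ?thesis using final_atomic final_orbit by simp
qed


end
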